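(* Let $(G_x \mid x \in \mathbb{N}_0)$ be the coclass family defined by $\eta \in H^3(P,T)$ and $x \in \mathbb{N}_0$. The objects of the Quillen category $\mathcal{A}_p(G_x)$ (the elementary abelian subgroups of $G_x$) are exactly the elements of the disjoint union of the sets $\mathcal{C}_x(L)$ for $L \in \mathcal{L}_\eta$.
   Context: Conventions: normalised cocycles $Z^n$, coboundaries $B^n$, cohomology $H^n$ for right modules written additively; $\mathrm{Ext}(\tau)$ is $G\times M$ with $(g,m)(h,n)=(gh,m^h+n+\tau(g,h))$. Setting: $S$ infinite pro-$p$-group of finite coclass; $T=\gamma_\ell(S)$ ($\ell$ large), $T\cong\mathbb{Z}_p^d$, $P=S/T$ finite, $|P|=p^m$, the series $T_0=T$, $T_{i+1}=[T_i,S]$ with all indices $p$; $T$ an additive $P$-module via conjugation; $S=\mathrm{Ext}(\rho)$, $\rho\in Z^2(P,T)$. $\mathcal{L}$ = elementary abelian $L\leq P$ with $\rho_L\in B^2(L,T)$; $\mathcal{L}_\eta=\{L\in\mathcal{L}\mid \mathrm{res}^P_L(\eta)=0\in H^3(L,T)\}$. Coclass family: $e=3m$, $M_x=T/p^{x+e}T$; $pro_x: Z^2(P,T)\to Z^2(P,M_x)$ induced by projection with image $I^2(P,M_x)$; $J^2(P,M_x)$ the image of $Z^2(P,p^{x+e-m}T/p^{x+e}T)\to Z^2(P,M_x)$ induced by inclusion; fixed complements $K^2(P,M_x)\leq J^2(P,M_x)$ of $I^2(P,M_x)$ in $Z^2(P,M_x)$ with $mul(K^2(P,M_x))=K^2(P,M_{x+1})$,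 $mul$ induced by $t+p^{x+e}T\mapsto pt+p^{x+e+1}T$. The composite $Z^2(P,M_x)\to H^2(P,M_x)\to H^3(P,p^{x+e}T)\to H^3(P,T)$ (quotient, connecting homomorphism, division by $p^{x+e}$) restricts to an isomorphism on $K^2(P,M_x)$; $\eta_x$ is the preimage of $\eta$, $\rho_x=pro_x(\rho)$, $G_x=\mathrm{Ext}(\rho_x+\eta_x)$, $M_x$ identified with $\{(1,m)\}$. For $L\leq P$, $\overline{L}_x$ is the full preimage of $L$ in $G_x$ under $(g,m)\mapsto g$. For $L\in\mathcal{L}_\eta$, $\overline{L}_x$ splits over $M_x$; fix a complement $C_{L,x}=\{c_{L,x}(l)\mid l\in L\}$ with $c_{L,x}(l)=(l,t_{L,x}(l))$, and for $\gamma\in Z^1(L,M_x)$ put $C_{L,x}(\gamma)=\{(l,t_{L,x}(l)+\gamma(l))\mid l\in L\}$. Let $\mathcal{O}_x(L)$ be the set of elementary abelian subgroups of $M_x$ centralised by $L$, and $\mathcal{C}_x(L)=\{C_{L,x}(\gamma)\times O\mid \gamma\in Z^1(L,M_x),\ O\in\mathcal{O}_x(L)\}$. *)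

theory Defs
  imports "HOL-Algebra.Algebra"
begin

text \<open>A p-adic integer is the compatible sequence of its residues mod p^n.\<close>
definition zp :: "nat \<Rightarrow> (nat \<Rightarrow> int) set" where
  "zp p = {a. \<forall>n. 0 \<le> a n \<and> a n < int p ^ n \<and> a (Suc n) mod (int p ^ n) = a n}"

text \<open>Elements of Z_p^d: coordinates i < d are p-adic integers, the others are zero.\<close>
definition Zpd :: "nat \<Rightarrow> nat \<Rightarrow> (nat \<Rightarrow> nat \<Rightarrow> int) set" where
  "Zpd p d = {v. (\<forall>i<d. v i \<in> zp p) \<and> (\<forall>i\<ge>d. v i = (\<lambda>n. 0))}"

definition zadd :: "nat \<Rightarrow> (nat \<Rightarrow> nat \<Rightarrow> int) \<Rightarrow> (nat \<Rightarrow> nat \<Rightarrow> int) \<Rightarrow> (nat \<Rightarrow> nat \<Rightarrow> int)" where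
  "zadd p v w = (\<lambda>i n. (v i n + w i n) mod (int p ^ n))"

definition zneg :: "nat \<Rightarrow> (nat \<Rightarrow> nat \<Rightarrow> int) \<Rightarrow> (nat \<Rightarrow> nat \<Rightarrow> int)" where
  "zneg p v = (\<lambda>i n. (- v i n) mod (int p ^ n))"

definition zsmul :: "nat \<Rightarrow> int \<Rightarrow> (nat \<Rightarrow> nat \<Rightarrow> int) \<Rightarrow> (nat \<Rightarrow> nat \<Rightarrow> int)" where
  "zsmul p c v = (\<lambda>i n. (c * v i n) mod (int p ^ n))"

definition zpscal :: "nat \<Rightarrow> (nat \<Rightarrow> int) \<Rightarrow> (nat \<Rightarrow> nat \<Rightarrow> int) \<Rightarrow> (nat \<Rightarrow> nat \<Rightarrow> int)" where
  "zpscal p a v = (\<lambda>i n. (a n * v i n) mod (int p ^ n))"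

definition zdivp :: "nat \<Rightarrow> nat \<Rightarrow> nat \<Rightarrow> (nat \<Rightarrow> nat \<Rightarrow> int) \<Rightarrow> (nat \<Rightarrow> nat \<Rightarrow> int)" where
  "zdivp p d k w = (THE v. v \<in> Zpd p d \<and> zsmul p (int p ^ k) v = w)"

record ('g, 'a) pmod =
  mcar :: "'a set"
  madd :: "'a \<Rightarrow> 'a \<Rightarrow> 'a"
  mzero :: 'a
  mneg :: "'a \<Rightarrow> 'a"
  mact :: "'a \<Rightarrow> 'g \<Rightarrow> 'a"

definition msub :: "('g, 'a) pmod \<Rightarrow> 'a \<Rightarrow> 'a \<Rightarrow> 'a" where
  "msub A x y = madd A x (mneg A y)"

definition Tmod :: "nat \<Rightarrow> nat \<Rightarrow> ((nat \<Rightarrow> nat \<Rightarrow> int) \<Rightarrow> 'g \<Rightarrow> (nat \<Rightarrow> nat \<Rightarrow> int))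
    \<Rightarrow> ('g, nat \<Rightarrow> nat \<Rightarrow> int) pmod" where
  "Tmod p d act = \<lparr>mcar = Zpd p d, madd = zadd p, mzero = (\<lambda>i n. 0), mneg = zneg p, mact = act\<rparr>"

text \<open>Projection T \<rightarrow> T / p^k T; an element of T/p^k T is stored as its vector of residues mod p^k.\<close>
definition trunc :: "nat \<Rightarrow> (nat \<Rightarrow> nat \<Rightarrow> int) \<Rightarrow> (nat \<Rightarrow> int)" where
  "trunc k v = (\<lambda>i. v i k)"

text \<open>Canonical lift T/p^k T \<rightarrow> T (a set-theoretic section of the projection).\<close>
definition liftM :: "nat \<Rightarrow> (nat \<Rightarrow> int) \<Rightarrow> (nat \<Rightarrow> nat \<Rightarrow> int)" where
  "liftM p a = (\<lambda>i n. a i mod (int p ^ n))"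

definition Mmod :: "nat \<Rightarrow> nat \<Rightarrow> nat \<Rightarrow> ((nat \<Rightarrow> nat \<Rightarrow> int) \<Rightarrow> 'g \<Rightarrow> (nat \<Rightarrow> nat \<Rightarrow> int))
    \<Rightarrow> ('g, nat \<Rightarrow> int) pmod" where
  "Mmod p d k act = \<lparr>mcar = trunc k ` Zpd p d,
     madd = (\<lambda>a b i. (a i + b i) mod (int p ^ k)),
     mzero = (\<lambda>i. 0),
     mneg = (\<lambda>a i. (- a i) mod (int p ^ k)),
     mact = (\<lambda>a g. trunc k (act (liftM p a) g))\<rparr>"

text \<open>The map mul : T/p^k T \<rightarrow> T/p^(k+1) T, t + p^k T \<mapsto> p t + p^(k+1) T.\<close>
definition mulM :: "nat \<Rightarrow> nat \<Rightarrow> (nat \<Rightarrow> int) \<Rightarrow> (nat \<Rightarrow> int)" where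
  "mulM p k a = trunc (Suc k) (zsmul p (int p) (liftM p a))"

section \<open>Normalised cochains, cocycles, coboundaries (inhomogeneous, right modules)\<close>

text \<open>Cochains on a subset H (a subgroup) of the group G, with values in A,
  normalised, and (by convention) zero outside H.\<close>

definition cochain1 :: "('g, 'b) monoid_scheme \<Rightarrow> 'g set \<Rightarrow> ('g, 'a) pmod \<Rightarrow> ('g \<Rightarrow> 'a) set" where
  "cochain1 G H A = {f. (\<forall>g\<in>H. f g \<in> mcar A) \<and> (\<forall>g. g \<notin> H \<longrightarrow> f g = mzero A)
      \<and> f \<one>\<^bsub>G\<^esub> = mzero A}"

definition cochain2 :: "('g, 'b) monoid_scheme \<Rightarrow> 'g set \<Rightarrow> ('g, 'a) pmod \<Rightarrow> ('g \<Rightarrow> 'g \<Rightarrow> 'a) set" where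
  "cochain2 G H A = {f. (\<forall>g\<in>H. \<forall>h\<in>H. f g h \<in> mcar A)
      \<and> (\<forall>g h. (g \<notin> H \<or> h \<notin> H) \<longrightarrow> f g h = mzero A)
      \<and> (\<forall>g. f \<one>\<^bsub>G\<^esub> g = mzero A \<and> f g \<one>\<^bsub>G\<^esub> = mzero A)}"

definition cochain3 :: "('g, 'b) monoid_scheme \<Rightarrow> 'g set \<Rightarrow> ('g, 'a) pmod \<Rightarrow> ('g \<Rightarrow> 'g \<Rightarrow> 'g \<Rightarrow> 'a) set" where
  "cochain3 G H A = {f. (\<forall>g\<in>H. \<forall>h\<in>H. \<forall>k\<in>H. f g h k \<in> mcar A)
      \<and> (\<forall>g h k. (g \<notin> H \<or> h \<notin> H \<or> k \<notin> H) \<longrightarrow> f g h k = mzero A)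
      \<and> (\<forall>g h. f \<one>\<^bsub>G\<^esub> g h = mzero A \<and> f g \<one>\<^bsub>G\<^esub> h = mzero A \<and> f g h \<one>\<^bsub>G\<^esub> = mzero A)}"

text \<open>Coboundary maps: (\<delta>f)(g1..g(n+1)) = f(g2..) + \<Sum>(-1)^i f(..,gi g(i+1),..) + (-1)^(n+1) f(g1..gn)^g(n+1).\<close>

definition cobd1 :: "('g, 'b) monoid_scheme \<Rightarrow> ('g, 'a) pmod \<Rightarrow> ('g \<Rightarrow> 'a) \<Rightarrow> 'g \<Rightarrow> 'g \<Rightarrow> 'a" where
  "cobd1 G A f g h = madd A (msub A (f h) (f (g \<otimes>\<^bsub>G\<^esub> h))) (mact A (f g) h)"

definition cobd2 :: "('g, 'b) monoid_scheme \<Rightarrow> ('g, 'a) pmod \<Rightarrow> ('g \<Rightarrow> 'g \<Rightarrow> 'a) \<Rightarrow> 'g \<Rightarrow> 'g \<Rightarrow> 'g \<Rightarrow> 'a" where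
  "cobd2 G A f g h k = msub A (madd A (msub A (f h k) (f (g \<otimes>\<^bsub>G\<^esub> h) k)) (f g (h \<otimes>\<^bsub>G\<^esub> k)))
                              (mact A (f g h) k)"

definition cobd3 :: "('g, 'b) monoid_scheme \<Rightarrow> ('g, 'a) pmod \<Rightarrow> ('g \<Rightarrow> 'g \<Rightarrow> 'g \<Rightarrow> 'a)
    \<Rightarrow> 'g \<Rightarrow> 'g \<Rightarrow> 'g \<Rightarrow> 'g \<Rightarrow> 'a" where
  "cobd3 G A f g h k l = madd A (msub A (madd A (msub A (f h k l) (f (g \<otimes>\<^bsub>G\<^esub> h) k l))
        (f g (h \<otimes>\<^bsub>G\<^esub> k) l)) (f g h (k \<otimes>\<^bsub>G\<^esub> l))) (mact A (f g h k) l)"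

definition Z1 :: "('g, 'b) monoid_scheme \<Rightarrow> 'g set \<Rightarrow> ('g, 'a) pmod \<Rightarrow> ('g \<Rightarrow> 'a) set" where
  "Z1 G H A = {f \<in> cochain1 G H A. \<forall>g\<in>H. \<forall>h\<in>H.
      f (g \<otimes>\<^bsub>G\<^esub> h) = madd A (mact A (f g) h) (f h)}"

definition Z2 :: "('g, 'b) monoid_scheme \<Rightarrow> 'g set \<Rightarrow> ('g, 'a) pmod \<Rightarrow> ('g \<Rightarrow> 'g \<Rightarrow> 'a) set" where
  "Z2 G H A = {f \<in> cochain2 G H A. \<forall>g\<in>H. \<forall>h\<in>H. \<forall>k\<in>H.
      madd A (mact A (f g h) k) (f (g \<otimes>\<^bsub>G\<^esub> h) k) = madd A (f h k) (f g (h \<otimes>\<^bsub>G\<^esub> k))}"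

definition B2 :: "('g, 'b) monoid_scheme \<Rightarrow> 'g set \<Rightarrow> ('g, 'a) pmod \<Rightarrow> ('g \<Rightarrow> 'g \<Rightarrow> 'a) set" where
  "B2 G H A = {f \<in> cochain2 G H A. \<exists>c\<in>cochain1 G H A. \<forall>g\<in>H. \<forall>h\<in>H. f g h = cobd1 G A c g h}"

definition Z3 :: "('g, 'b) monoid_scheme \<Rightarrow> 'g set \<Rightarrow> ('g, 'a) pmod \<Rightarrow> ('g \<Rightarrow> 'g \<Rightarrow> 'g \<Rightarrow> 'a) set" where
  "Z3 G H A = {f \<in> cochain3 G H A. \<forall>g\<in>H. \<forall>h\<in>H. \<forall>k\<in>H. \<forall>l\<in>H.
      cobd3 G A f g h k l = mzero A}"

definition B3 :: "('g, 'b) monoid_scheme \<Rightarrow> 'g set \<Rightarrow> ('g, 'a) pmod \<Rightarrow> ('g \<Rightarrow> 'g \<Rightarrow> 'g \<Rightarrow> 'a) set" where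
  "B3 G H A = {f \<in> cochain3 G H A. \<exists>c\<in>cochain2 G H A. \<forall>g\<in>H. \<forall>h\<in>H. \<forall>k\<in>H.
      f g h k = cobd2 G A c g h k}"

definition res2 :: "'g set \<Rightarrow> ('g, 'a) pmod \<Rightarrow> ('g \<Rightarrow> 'g \<Rightarrow> 'a) \<Rightarrow> ('g \<Rightarrow> 'g \<Rightarrow> 'a)" where
  "res2 L A f = (\<lambda>g h. if g \<in> L \<and> h \<in> L then f g h else mzero A)"

definition res3 :: "'g set \<Rightarrow> ('g, 'a) pmod \<Rightarrow> ('g \<Rightarrow> 'g \<Rightarrow> 'g \<Rightarrow> 'a) \<Rightarrow> ('g \<Rightarrow> 'g \<Rightarrow> 'g \<Rightarrow> 'a)" where
  "res3 L A f = (\<lambda>g h k. if g \<in> L \<and> h \<in> L \<and> k \<in> L then f g h k else mzero A)"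

definition ext_group :: "('g, 'b) monoid_scheme \<Rightarrow> ('g, 'a) pmod \<Rightarrow> ('g \<Rightarrow> 'g \<Rightarrow> 'a)
    \<Rightarrow> ('g \<times> 'a) monoid" where
  "ext_group G A tau = \<lparr>carrier = carrier G \<times> mcar A,
     monoid.mult = (\<lambda>(g, m) (h, n). (g \<otimes>\<^bsub>G\<^esub> h, madd A (madd A (mact A m h) n) (tau g h))),
     monoid.one = (\<one>\<^bsub>G\<^esub>, mzero A)\<rparr>"

definition elem_ab :: "nat \<Rightarrow> ('a, 'b) monoid_scheme \<Rightarrow> 'a set \<Rightarrow> bool" where
  "elem_ab p G E \<longleftrightarrow> subgroup E G \<and> (\<forall>x\<in>E. \<forall>y\<in>E. x \<otimes>\<^bsub>G\<^esub> y = y \<otimes>\<^bsub>G\<^esub> x)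
      \<and> (\<forall>x\<in>E. x [^]\<^bsub>G\<^esub> p = \<one>\<^bsub>G\<^esub>)"

definition gcomm :: "('a, 'b) monoid_scheme \<Rightarrow> 'a \<Rightarrow> 'a \<Rightarrow> 'a" where
  "gcomm G a b = inv\<^bsub>G\<^esub> a \<otimes>\<^bsub>G\<^esub> inv\<^bsub>G\<^esub> b \<otimes>\<^bsub>G\<^esub> a \<otimes>\<^bsub>G\<^esub> b"

text \<open>Closure in the pro-p topology of S = Ext(rho) = P x T: the subgroups
  {1} x p^n T form a base of open neighbourhoods of the identity.\<close>
definition sclosure :: "nat \<Rightarrow> nat \<Rightarrow> ('g, 'b) monoid_scheme \<Rightarrow> ('g \<times> (nat \<Rightarrow> nat \<Rightarrow> int)) monoid
    \<Rightarrow> ('g \<times> (nat \<Rightarrow> nat \<Rightarrow> int)) set \<Rightarrow> ('g \<times> (nat \<Rightarrow> nat \<Rightarrow> int)) set" where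
  "sclosure p d P S H = (\<Inter>n. H <#>\<^bsub>S\<^esub> {(\<one>\<^bsub>P\<^esub>, zsmul p (int p ^ n) t) | t. t \<in> Zpd p d})"

primrec cser :: "('a set \<Rightarrow> 'a set) \<Rightarrow> ('a, 'b) monoid_scheme \<Rightarrow> 'a set \<Rightarrow> nat \<Rightarrow> 'a set" where
  "cser cl S A 0 = A"
| "cser cl S A (Suc i) = cl (generate S {gcomm S a b | a b. a \<in> cser cl S A i \<and> b \<in> carrier S})"


text \<open>S = Ext(rho), with T identified with {(1,t)}.\<close>
definition Sgrp :: "'g monoid \<Rightarrow> nat \<Rightarrow> nat \<Rightarrow> ((nat \<Rightarrow> nat \<Rightarrow> int) \<Rightarrow> 'g \<Rightarrow> (nat \<Rightarrow> nat \<Rightarrow> int))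
    \<Rightarrow> ('g \<Rightarrow> 'g \<Rightarrow> (nat \<Rightarrow> nat \<Rightarrow> int)) \<Rightarrow> ('g \<times> (nat \<Rightarrow> nat \<Rightarrow> int)) monoid" where
  "Sgrp P p d act rho = ext_group P (Tmod p d act) rho"

definition Tsub :: "'g monoid \<Rightarrow> nat \<Rightarrow> nat \<Rightarrow> ('g \<times> (nat \<Rightarrow> nat \<Rightarrow> int)) set" where
  "Tsub P p d = {\<one>\<^bsub>P\<^esub>} \<times> Zpd p d"

text \<open>Lower central series of S: lcs i = gamma_(i+1)(S) (closed commutator subgroups).\<close>
definition lcsS where
  "lcsS P p d act rho = cser (sclosure p d P (Sgrp P p d act rho)) (Sgrp P p d act rho)
       (carrier (Sgrp P p d act rho))"

definition Tser where
  "Tser P p d act rho = cser (sclosure p d P (Sgrp P p d act rho)) (Sgrp P p d act rho) (Tsub P p d)"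

text \<open>M_y = T / p^(y+e) T with e = 3m.\<close>
definition Mx :: "nat \<Rightarrow> nat \<Rightarrow> nat \<Rightarrow> ((nat \<Rightarrow> nat \<Rightarrow> int) \<Rightarrow> 'g \<Rightarrow> (nat \<Rightarrow> nat \<Rightarrow> int)) \<Rightarrow> nat
    \<Rightarrow> ('g, nat \<Rightarrow> int) pmod" where
  "Mx p d m act y = Mmod p d (y + 3 * m) act"

definition Ic where
  "Ic P p d m act y = (\<lambda>\<sigma> g h. trunc (y + 3 * m) (\<sigma> g h)) ` Z2 P (carrier P) (Tmod p d act)"

text \<open>J^2(P,M_y): image of Z^2(P, p^(y+e-m)T / p^(y+e)T) under inclusion.\<close>
definition Jc where
  "Jc P p d m act y = {\<sigma> \<in> Z2 P (carrier P) (Mx p d m act y). \<forall>g h. \<sigma> g h \<in>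
       trunc (y + 3 * m) ` {zsmul p (int p ^ (y + 3 * m - m)) t | t. t \<in> Zpd p d}}"

definition Cadd :: "('g, 'a) pmod \<Rightarrow> ('g \<Rightarrow> 'g \<Rightarrow> 'a) \<Rightarrow> ('g \<Rightarrow> 'g \<Rightarrow> 'a) \<Rightarrow> ('g \<Rightarrow> 'g \<Rightarrow> 'a)" where
  "Cadd A \<sigma> \<tau> = (\<lambda>g h. madd A (\<sigma> g h) (\<tau> g h))"

text \<open>The composite Z^2(P,M_y) \<rightarrow> H^2(P,M_y) \<rightarrow> H^3(P,p^(y+e)T) \<rightarrow> H^3(P,T) on cocycle level:
  lift, apply the coboundary, divide by p^(y+e).\<close>
definition conn where
  "conn P p d m act y \<sigma> = (\<lambda>g h k. if g \<in> carrier P \<and> h \<in> carrier P \<and> k \<in> carrier P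
      then zdivp p d (y + 3 * m) (cobd2 P (Tmod p d act) (\<lambda>a b. liftM p (\<sigma> a b)) g h k)
      else (\<lambda>i n. 0))"

definition Lcal where
  "Lcal P p d act rho = {L. elem_ab p P L \<and> res2 L (Tmod p d act) rho \<in> B2 P L (Tmod p d act)}"

definition Leta where
  "Leta P p d act rho eta = {L \<in> Lcal P p d act rho.
      res3 L (Tmod p d act) eta \<in> B3 P L (Tmod p d act)}"

definition Gx where
  "Gx P p d m act rho etax x = ext_group P (Mx p d m act x)
      (\<lambda>g h. madd (Mx p d m act x) (trunc (x + 3 * m) (rho g h)) (etax g h))"

definition Ox where
  "Ox P p d m act rho etax x L = {Q. Q \<subseteq> {\<one>\<^bsub>P\<^esub>} \<times> mcar (Mx p d m act x)
      \<and> elem_ab p (Gx P p d m act rho etax x) Q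
      \<and> (\<forall>l\<in>L. \<forall>u. (\<one>\<^bsub>P\<^esub>, u) \<in> Q \<longrightarrow> mact (Mx p d m act x) u l = u)}"

definition CL where
  "CL p d m act x t \<gamma> L = {(l, madd (Mx p d m act x) (t l) (\<gamma> l)) | l. l \<in> L}"

definition Cx where
  "Cx P p d m act rho etax x t L = {CL p d m act x t \<gamma> L <#>\<^bsub>Gx P p d m act rho etax x\<^esub> Q | \<gamma> Q.
      \<gamma> \<in> Z1 P L (Mx p d m act x) \<and> Q \<in> Ox P p d m act rho etax x L}"

end

theory Submission imports Defs begin

lemma zp_iter:
  assumes "a \<in> zp p" shows "a (n + j) mod int p ^ n = a n"
proof (induction j)
  case 0 then show ?case using assms unfolding zp_def by simp
next
  case (Suc j)
  have "a (n + Suc j) mod int p ^ n = (a (Suc (n + j)) mod int p ^ (n + j)) mod int p ^ n"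
    by (simp add: mod_mod_cancel le_imp_power_dvd)
  also have "\<dots> = a (n + j) mod int p ^ n" using assms unfolding zp_def by simp
  finally show ?case using Suc by simp
qed

lemma zp_range: "a \<in> zp p \<Longrightarrow> 0 \<le> a n \<and> a n < int p ^ n"
  unfolding zp_def by simp

lemma zp_mod: "a \<in> zp p \<Longrightarrow> a n mod int p ^ n = a n"
  using zp_range[of a p n] by simp

lemma zp_modI:
  assumes p: "p > 0" and c: "\<And>n. f (Suc n) mod int p ^ n = f n mod int p ^ n"
  shows "(\<lambda>n. f n mod int p ^ n) \<in> zp p"
  unfolding zp_def
proof (intro CollectI allI conjI)
  fix n
  show "0 \<le> f n mod int p ^ n" using p by simp
  show "f n mod int p ^ n < int p ^ n" using p by simp
  show "f (Suc n) mod int p ^ Suc n mod int p ^ n = f n mod int p ^ n"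
    using c[of n] by (simp add: mod_mod_cancel le_imp_power_dvd)
qed

lemma Zpd_modI:
  assumes p: "p > 0" and c: "\<And>i n. i < d \<Longrightarrow> f i (Suc n) mod int p ^ n = f i n mod int p ^ n"
    and z: "\<And>i n. d \<le> i \<Longrightarrow> f i n mod int p ^ n = 0"
  shows "(\<lambda>i n. f i n mod int p ^ n) \<in> Zpd p d"
  unfolding Zpd_def
proof (intro CollectI conjI allI impI)
  fix i assume "i < d"
  show "(\<lambda>n. f i n mod int p ^ n) \<in> zp p" by (rule zp_modI[OF p c[OF \<open>i < d\<close>]])
next
  fix i assume "d \<le> i"
  then show "(\<lambda>n. f i n mod int p ^ n) = (\<lambda>n. 0)" using z by auto
qed

lemma Zpd_zp: "v \<in> Zpd p d \<Longrightarrow> i < d \<Longrightarrow> v i \<in> zp p"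
  unfolding Zpd_def by auto

lemma Zpd_high: "v \<in> Zpd p d \<Longrightarrow> d \<le> i \<Longrightarrow> v i n = 0"
  unfolding Zpd_def by auto

lemma Zpd_mod: "v \<in> Zpd p d \<Longrightarrow> v i n mod int p ^ n = v i n"
  by (cases "i < d") (auto simp: zp_mod Zpd_zp Zpd_high)

lemma Zpd_coh: "v \<in> Zpd p d \<Longrightarrow> v i (Suc n) mod int p ^ n = v i n"
  by (cases "i < d") (use Zpd_zp in \<open>auto simp: Zpd_high zp_def\<close>)

lemma Zpd_coh': "v \<in> Zpd p d \<Longrightarrow> v i (Suc n) mod int p ^ n = v i n mod int p ^ n"
  by (simp add: Zpd_coh Zpd_mod)

lemma Zpd_iter: "v \<in> Zpd p d \<Longrightarrow> v i (n + j) mod int p ^ n = v i n"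
  by (cases "i < d") (auto simp: Zpd_zp Zpd_high zp_iter)

lemma Zpd_range: "p > 0 \<Longrightarrow> v \<in> Zpd p d \<Longrightarrow> 0 \<le> v i n \<and> v i n < int p ^ n"
  by (cases "i < d") (auto simp: Zpd_high dest: Zpd_zp zp_range)

lemma Zpd_eqI:
  assumes "v \<in> Zpd p d" "w \<in> Zpd p d" "\<And>i n. v i n mod int p ^ n = w i n mod int p ^ n"
  shows "v = w"
  using assms by (auto simp: Zpd_mod fun_eq_iff)

lemma zadd_Zpd: "p > 0 \<Longrightarrow> v \<in> Zpd p d \<Longrightarrow> w \<in> Zpd p d \<Longrightarrow> zadd p v w \<in> Zpd p d"
  unfolding zadd_def
  by (rule Zpd_modI) (auto simp: Zpd_high intro!: mod_add_cong[OF Zpd_coh' Zpd_coh'])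

lemma zneg_Zpd: "p > 0 \<Longrightarrow> v \<in> Zpd p d \<Longrightarrow> zneg p v \<in> Zpd p d"
  unfolding zneg_def
  by (rule Zpd_modI) (auto simp: Zpd_high intro!: mod_minus_cong[OF Zpd_coh'])

lemma zsmul_Zpd: "p > 0 \<Longrightarrow> v \<in> Zpd p d \<Longrightarrow> zsmul p c v \<in> Zpd p d"
  unfolding zsmul_def
  by (rule Zpd_modI) (auto simp: Zpd_high Zpd_coh intro!: mod_mult_cong[OF refl Zpd_coh'])

lemma zero_Zpd: "p > 0 \<Longrightarrow> (\<lambda>i n. 0) \<in> Zpd p d"
  unfolding Zpd_def zp_def by auto

lemma modI: "(\<exists>z. (x::int) - y = Q * z) \<Longrightarrow> x mod Q = y mod Q"
  by (auto simp: mod_eq_dvd_iff dvd_def)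
lemma modD: "(x::int) mod Q = y mod Q \<Longrightarrow> \<exists>z. x - y = Q * z"
  by (auto simp: mod_eq_dvd_iff dvd_def)

lemmas modn = mod_simps mod_mod_trivial

lemma modc1: "(a1::int) mod Q = b1 mod Q \<Longrightarrow> x - y = c1 * (a1 - b1) \<Longrightarrow> x mod Q = y mod Q"
  by (metis (no_types, opaque_lifting) dvd_mult mod_eq_dvd_iff)
lemma modc2: "(a1::int) mod Q = b1 mod Q \<Longrightarrow> a2 mod Q = b2 mod Q \<Longrightarrow>
   x - y = c1 * (a1 - b1) + c2 * (a2 - b2) \<Longrightarrow> x mod Q = y mod Q"
  by (simp add: mod_eq_dvd_iff dvd_add dvd_mult)
lemma modc3: "(a1::int) mod Q = b1 mod Q \<Longrightarrow> a2 mod Q = b2 mod Q \<Longrightarrow> a3 mod Q = b3 mod Q \<Longrightarrow>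
   x - y = c1 * (a1 - b1) + c2 * (a2 - b2) + c3 * (a3 - b3) \<Longrightarrow> x mod Q = y mod Q"
  by (simp add: mod_eq_dvd_iff dvd_add dvd_mult)
lemma modc4: "(a1::int) mod Q = b1 mod Q \<Longrightarrow> a2 mod Q = b2 mod Q \<Longrightarrow> a3 mod Q = b3 mod Q \<Longrightarrow>
   a4 mod Q = b4 mod Q \<Longrightarrow>
   x - y = c1 * (a1 - b1) + c2 * (a2 - b2) + c3 * (a3 - b3) + c4 * (a4 - b4) \<Longrightarrow> x mod Q = y mod Q"
  by (simp add: mod_eq_dvd_iff dvd_add dvd_mult)
lemma modc5: "(a1::int) mod Q = b1 mod Q \<Longrightarrow> a2 mod Q = b2 mod Q \<Longrightarrow> a3 mod Q = b3 mod Q \<Longrightarrow>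
   a4 mod Q = b4 mod Q \<Longrightarrow> a5 mod Q = b5 mod Q \<Longrightarrow>
   x - y = c1 * (a1 - b1) + c2 * (a2 - b2) + c3 * (a3 - b3) + c4 * (a4 - b4) + c5 * (a5 - b5) \<Longrightarrow> x mod Q = y mod Q"
  by (simp add: mod_eq_dvd_iff dvd_add dvd_mult)
lemma modc6: "(a1::int) mod Q = b1 mod Q \<Longrightarrow> a2 mod Q = b2 mod Q \<Longrightarrow> a3 mod Q = b3 mod Q \<Longrightarrow>
   a4 mod Q = b4 mod Q \<Longrightarrow> a5 mod Q = b5 mod Q \<Longrightarrow> a6 mod Q = b6 mod Q \<Longrightarrow>
   x - y = c1 * (a1 - b1) + c2 * (a2 - b2) + c3 * (a3 - b3) + c4 * (a4 - b4) + c5 * (a5 - b5) + c6 * (a6 - b6) \<Longrightarrow> x mod Q = y mod Q"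
  by (simp add: mod_eq_dvd_iff dvd_add dvd_mult)

lemma modeq_iff: "((x::int) mod Q = y mod Q) \<longleftrightarrow> (\<exists>z. x - y = Q * z)"
  by (simp add: mod_eq_dvd_iff dvd_def)

lemma Zpd_eqI2:
  assumes "v \<in> Zpd p d" "w \<in> Zpd p d" "\<And>i n. \<exists>z. v i n - w i n = int p ^ n * z"
  shows "v = w"
  using assms by (intro Zpd_eqI) (auto simp: modeq_iff)

lemma zsmul_inj:
  assumes p: "p > 0" and v: "v \<in> Zpd p d" and w: "w \<in> Zpd p d"
    and eq: "zsmul p (int p ^ j) v = zsmul p (int p ^ j) w"
  shows "v = w"
proof (rule Zpd_eqI[OF v w])
  fix i n
  have "(int p ^ j * v i (n + j)) mod int p ^ (n + j) = (int p ^ j * w i (n + j)) mod int p ^ (n + j)"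
    using fun_cong[OF fun_cong[OF eq, of i], of "n + j"] by (simp add: zsmul_def)
  then have "int p ^ (n + j) dvd int p ^ j * (v i (n + j) - w i (n + j))"
    by (simp add: mod_eq_dvd_iff algebra_simps)
  then have "int p ^ j * int p ^ n dvd int p ^ j * (v i (n + j) - w i (n + j))"
    by (simp add: power_add mult.commute)
  then have "int p ^ n dvd (v i (n + j) - w i (n + j))"
    using p by (subst (asm) dvd_mult_cancel_left) auto
  then have "v i (n + j) mod int p ^ n = w i (n + j) mod int p ^ n"
    by (simp add: mod_eq_dvd_iff)
  then show "v i n mod int p ^ n = w i n mod int p ^ n"
    using Zpd_iter[OF v, of i n j] Zpd_iter[OF w, of i n j] by simp
qed

lemma zdivp_eq:
  assumes p: "p > 0" and v: "v \<in> Zpd p d" and w: "zsmul p (int p ^ j) v = w"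
  shows "zdivp p d j w = v"
  unfolding zdivp_def
  using v w zsmul_inj[OF p] by (intro the_equality) auto

lemma Zpd_divisible:
  assumes p: "p > 0" and v: "v \<in> Zpd p d" and z: "\<And>i. v i k = 0"
  shows "\<exists>s\<in>Zpd p d. v = zsmul p (int p ^ k) s"
proof -
  define s where "s = (\<lambda>i n. v i (n + k) div int p ^ k)"
  have dv: "int p ^ k dvd v i (n + k)" for i n
    using Zpd_iter[OF v, of i k n] z[of i] by (simp add: add.commute dvd_eq_mod_eq_0)
  have pk: "int p ^ k > 0" using p by simp
  have range: "0 \<le> s i n \<and> s i n < int p ^ n" for i n
  proof -
    have "0 \<le> v i (n + k)" "v i (n + k) < int p ^ (n + k)"
      using Zpd_mod[OF v, of i "n + k"] pos_mod_bound[of "int p ^ (n+k)" "v i (n + k)"] p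
      by (metis of_nat_0_less_iff pos_mod_sign zero_less_power)+
    moreover obtain c where c: "v i (n + k) = int p ^ k * c" using dv by blast
    ultimately show ?thesis using pk unfolding s_def
      by (auto simp: power_add zero_le_mult_iff mult.commute[of "int p ^ n"])
  qed
  have sZ: "s \<in> Zpd p d"
    unfolding Zpd_def zp_def
  proof (intro CollectI conjI allI impI)
    fix i n assume "i < d"
    show "0 \<le> s i n" "s i n < int p ^ n" using range by auto
    obtain c where c: "v i (n + k) = int p ^ k * c" using dv by blast
    obtain c' where c': "v i (Suc n + k) = int p ^ k * c'" using dv by blast
    have "v i (Suc (n + k)) mod int p ^ (n + k) = v i (n + k)" using Zpd_coh[OF v] by simp
    then have "int p ^ (n + k) dvd v i (Suc n + k) - v i (n + k)"
      using Zpd_mod[OF v, of i "n + k"] mod_eq_dvd_iff[of "v i (Suc (n + k))" "int p ^ (n + k)" "v i (n + k)"] by simp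
    then obtain e where "v i (Suc n + k) - v i (n + k) = int p ^ (n + k) * e" by blast
    then have "int p ^ k * (c' - c) = int p ^ k * (int p ^ n * e)"
      using c c' by (simp add: power_add algebra_simps)
    then have "c' - c = int p ^ n * e" using p by simp
    then have "c' mod int p ^ n = c mod int p ^ n" by (simp add: modeq_iff)
    moreover have "c mod int p ^ n = c" using range[of i n] c p unfolding s_def by simp
    ultimately show "s i (Suc n) mod int p ^ n = s i n" using c c' pk unfolding s_def by simp
  next
    fix i assume "d \<le> i"
    then show "s i = (\<lambda>n. 0)" unfolding s_def using Zpd_high[OF v] by auto
  qed
  have "v = zsmul p (int p ^ k) s"
  proof (rule Zpd_eqI[OF v zsmul_Zpd[OF p sZ]])
    fix i n
    obtain c where c: "v i (n + k) = int p ^ k * c" using dv by blast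
    have "v i n = v i (n + k) mod int p ^ n" using Zpd_iter[OF v, of i n k] by simp
    then show "v i n mod int p ^ n = zsmul p (int p ^ k) s i n mod int p ^ n"
      unfolding zsmul_def s_def using c pk by simp
  qed
  with sZ show ?thesis by blast
qed

lemma zp_const: "p > 0 \<Longrightarrow> (\<lambda>n. c mod int p ^ n) \<in> zp p"
  using zp_modI[of p "\<lambda>n. c"] by simp

lemma zpscal_const: "zpscal p (\<lambda>n. c mod int p ^ n) t = zsmul p c t"
  unfolding zpscal_def zsmul_def by (simp only: mod_mult_left_eq)

lemma zneg_zsmul: "zneg p t = zsmul p (-1) t"
  unfolding zneg_def zsmul_def by simp

lemma zero_zsmul: "zsmul p 0 t = (\<lambda>i n. 0)"
  unfolding zsmul_def by simp

lemma (in group) elem_ab_prod: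
  assumes A: "elem_ab p G A" and B: "elem_ab p G B"
    and AB: "\<And>a b. a \<in> A \<Longrightarrow> b \<in> B \<Longrightarrow> a \<otimes> b = b \<otimes> a"
  shows "elem_ab p G (A <#> B)"
proof -
  have sA: "subgroup A G" and cA: "\<And>x y. x \<in> A \<Longrightarrow> y \<in> A \<Longrightarrow> x \<otimes> y = y \<otimes> x"
    and eA: "\<And>x. x \<in> A \<Longrightarrow> x [^] p = \<one>"
    using A unfolding elem_ab_def by auto
  have sB: "subgroup B G" and cB: "\<And>x y. x \<in> B \<Longrightarrow> y \<in> B \<Longrightarrow> x \<otimes> y = y \<otimes> x"
    and eB: "\<And>x. x \<in> B \<Longrightarrow> x [^] p = \<one>"
    using B unfolding elem_ab_def by auto
  have AG: "\<And>a. a \<in> A \<Longrightarrow> a \<in> carrier G" using subgroup.subset[OF sA] by blast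
  have BG: "\<And>a. a \<in> B \<Longrightarrow> a \<in> carrier G" using subgroup.subset[OF sB] by blast
  have mem: "x \<in> A <#> B \<longleftrightarrow> (\<exists>a\<in>A. \<exists>b\<in>B. x = a \<otimes> b)" for x
    unfolding set_mult_def by blast
  have swap: "(a \<otimes> b) \<otimes> (a' \<otimes> b') = (a \<otimes> a') \<otimes> (b \<otimes> b')"
    if "a \<in> A" "b \<in> B" "a' \<in> A" "b' \<in> B" for a b a' b'
  proof -
    have "(a \<otimes> b) \<otimes> (a' \<otimes> b') = a \<otimes> (b \<otimes> a') \<otimes> b'"
      using that AG BG by (simp add: m_assoc)
    also have "\<dots> = a \<otimes> (a' \<otimes> b) \<otimes> b'" using AB[OF that(3) that(2)] by simp
    also have "\<dots> = (a \<otimes> a') \<otimes> (b \<otimes> b')" using that AG BG by (simp add: m_assoc)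
    finally show ?thesis .
  qed
  have sub: "subgroup (A <#> B) G"
  proof (rule subgroupI)
    show "A <#> B \<subseteq> carrier G" using AG BG mem by auto
    show "A <#> B \<noteq> {}" using mem subgroup.one_closed[OF sA] subgroup.one_closed[OF sB] by blast
    show "x \<otimes> y \<in> A <#> B" if "x \<in> A <#> B" "y \<in> A <#> B" for x y
      using that swap subgroup.m_closed[OF sA] subgroup.m_closed[OF sB] mem by metis
    show "inv x \<in> A <#> B" if hx: "x \<in> A <#> B" for x
    proof -
      obtain a b where ab: "a \<in> A" "b \<in> B" "x = a \<otimes> b" using hx mem by blast
      have "inv x = inv b \<otimes> inv a" using ab AG BG by (simp add: inv_mult_group)
      also have "\<dots> = inv a \<otimes> inv b"
        using AB[OF subgroup.m_inv_closed[OF sA ab(1)] subgroup.m_inv_closed[OF sB ab(2)]] by simp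
      finally show ?thesis using mem subgroup.m_inv_closed[OF sA ab(1)] subgroup.m_inv_closed[OF sB ab(2)] by blast
    qed
  qed
  moreover have "\<forall>x\<in>A <#> B. \<forall>y\<in>A <#> B. x \<otimes> y = y \<otimes> x"
  proof (intro ballI)
    fix x y assume "x \<in> A <#> B" "y \<in> A <#> B"
    then obtain a b a' b' where ab: "a \<in> A" "b \<in> B" "x = a \<otimes> b" "a' \<in> A" "b' \<in> B" "y = a' \<otimes> b'"
      using mem by metis
    have "x \<otimes> y = (a \<otimes> a') \<otimes> (b \<otimes> b')" using swap ab by simp
    also have "\<dots> = (a' \<otimes> a) \<otimes> (b' \<otimes> b)" using cA cB ab by simp
    also have "\<dots> = y \<otimes> x" using swap ab by simp
    finally show "x \<otimes> y = y \<otimes> x" .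
  qed
  moreover have "\<forall>x\<in>A <#> B. x [^] p = \<one>"
  proof
    fix x assume "x \<in> A <#> B"
    then obtain a b where ab: "a \<in> A" "b \<in> B" "x = a \<otimes> b" using mem by blast
    have "x [^] p = a [^] p \<otimes> b [^] p"
      using ab pow_mult_distrib[OF AB[OF ab(1,2)] AG[OF ab(1)] BG[OF ab(2)]] by simp
    then show "x [^] p = \<one>" using eA eB ab by simp
  qed
  ultimately show ?thesis unfolding elem_ab_def by blast
qed

locale tset =
  fixes P :: "'g monoid" and p d :: nat
    and act :: "(nat \<Rightarrow> nat \<Rightarrow> int) \<Rightarrow> 'g \<Rightarrow> (nat \<Rightarrow> nat \<Rightarrow> int)"
  assumes p_pos: "p > 0"
    and P_group: "group P"
    and act_closed: "\<forall>t\<in>Zpd p d. \<forall>g\<in>carrier P. act t g \<in> Zpd p d"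
    and act_one: "\<forall>t\<in>Zpd p d. act t \<one>\<^bsub>P\<^esub> = t"
    and act_mult: "\<forall>t\<in>Zpd p d. \<forall>g\<in>carrier P. \<forall>h\<in>carrier P.
                     act (act t g) h = act t (g \<otimes>\<^bsub>P\<^esub> h)"
    and act_add: "\<forall>t\<in>Zpd p d. \<forall>s\<in>Zpd p d. \<forall>g\<in>carrier P.
                     act (zadd p t s) g = zadd p (act t g) (act s g)"
    and act_lin: "\<forall>a\<in>zp p. \<forall>t\<in>Zpd p d. \<forall>g\<in>carrier P.
                     act (zpscal p a t) g = zpscal p a (act t g)"
begin

lemma actZ[simp]: "t \<in> Zpd p d \<Longrightarrow> g \<in> carrier P \<Longrightarrow> act t g \<in> Zpd p d"
  using act_closed by blast

lemma zaddZ[simp]: "v \<in> Zpd p d \<Longrightarrow> w \<in> Zpd p d \<Longrightarrow> zadd p v w \<in> Zpd p d"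
  using zadd_Zpd p_pos by blast
lemma znegZ[simp]: "v \<in> Zpd p d \<Longrightarrow> zneg p v \<in> Zpd p d"
  using zneg_Zpd p_pos by blast
lemma zsmulZ[simp]: "v \<in> Zpd p d \<Longrightarrow> zsmul p c v \<in> Zpd p d"
  using zsmul_Zpd p_pos by blast
lemma zeroZ[simp]: "(\<lambda>i n. 0) \<in> Zpd p d"
  using zero_Zpd p_pos by blast

lemma act_zadd: "t \<in> Zpd p d \<Longrightarrow> s \<in> Zpd p d \<Longrightarrow> g \<in> carrier P \<Longrightarrow>
    act (zadd p t s) g = zadd p (act t g) (act s g)"
  using act_add by blast

lemma act_one'[simp]: "t \<in> Zpd p d \<Longrightarrow> act t \<one>\<^bsub>P\<^esub> = t"
  using act_one by blast

lemma act_act: "t \<in> Zpd p d \<Longrightarrow> g \<in> carrier P \<Longrightarrow> h \<in> carrier P \<Longrightarrow>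
    act (act t g) h = act t (g \<otimes>\<^bsub>P\<^esub> h)"
  using act_mult by blast

lemma act_zsmul: "t \<in> Zpd p d \<Longrightarrow> g \<in> carrier P \<Longrightarrow> act (zsmul p c t) g = zsmul p c (act t g)"
proof -
  assume a: "t \<in> Zpd p d" "g \<in> carrier P"
  have "act (zpscal p (\<lambda>n. c mod int p ^ n) t) g = zpscal p (\<lambda>n. c mod int p ^ n) (act t g)"
    using act_lin zp_const[OF p_pos, of c] a by blast
  then show ?thesis by (simp only: zpscal_const)
qed

lemma act_zneg: "t \<in> Zpd p d \<Longrightarrow> g \<in> carrier P \<Longrightarrow> act (zneg p t) g = zneg p (act t g)"
  by (simp add: zneg_zsmul act_zsmul)

lemma act_zero: "g \<in> carrier P \<Longrightarrow> act (\<lambda>i n. 0) g = (\<lambda>i n. 0)"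
  using act_zsmul[of "\<lambda>i n. 0" g 0] by (simp add: zero_zsmul)

lemma act_level:
  assumes t: "t \<in> Zpd p d" and t': "t' \<in> Zpd p d" and g: "g \<in> carrier P"
    and eq: "\<And>i. t i k = t' i k"
  shows "act t g i k = act t' g i k"
proof -
  define v where "v = zadd p t (zneg p t')"
  have vZ: "v \<in> Zpd p d" using t t' by (simp add: v_def)
  have "v i k = 0" for i
    unfolding v_def zadd_def zneg_def using eq[of i] by (simp add: mod_add_right_eq)
  then obtain s where s: "s \<in> Zpd p d" "v = zsmul p (int p ^ k) s"
    using Zpd_divisible[OF p_pos vZ] by blast
  have "t = zadd p t' v"
  proof (rule Zpd_eqI[OF t])
    show "zadd p t' v \<in> Zpd p d" using t' vZ by simp
    fix i n show "t i n mod int p ^ n = zadd p t' v i n mod int p ^ n"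
      unfolding v_def zadd_def zneg_def by (simp add: mod_simps)
  qed
  then have "act t g = zadd p (act t' g) (zsmul p (int p ^ k) (act s g))"
    using s t' g by (simp add: act_zadd act_zsmul)
  then show ?thesis
    using Zpd_mod[OF actZ[OF t' g]] by (simp add: zadd_def zsmul_def)
qed

abbreviation "MM k \<equiv> Mmod p d k act"

lemma mcar_Mmod: "mcar (Mmod p d k act) = trunc k ` Zpd p d"
  by (simp add: Mmod_def)

lemma liftM_Zpd: "(\<And>i. d \<le> i \<Longrightarrow> a i = 0) \<Longrightarrow> liftM p a \<in> Zpd p d"
  unfolding liftM_def by (rule Zpd_modI[OF p_pos]) auto

lemma mcar_iff: "a \<in> mcar (MM k) \<longleftrightarrow> (\<forall>i. 0 \<le> a i \<and> a i < int p ^ k) \<and> (\<forall>i. d \<le> i \<longrightarrow> a i = 0)"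
proof
  assume "a \<in> mcar (MM k)"
  then obtain v where v: "v \<in> Zpd p d" "a = trunc k v" unfolding mcar_Mmod by blast
  show "(\<forall>i. 0 \<le> a i \<and> a i < int p ^ k) \<and> (\<forall>i. d \<le> i \<longrightarrow> a i = 0)"
    using Zpd_range[OF p_pos v(1)] Zpd_high[OF v(1)] unfolding v(2) trunc_def by auto
next
  assume a: "(\<forall>i. 0 \<le> a i \<and> a i < int p ^ k) \<and> (\<forall>i. d \<le> i \<longrightarrow> a i = 0)"
  then have "liftM p a \<in> Zpd p d" by (intro liftM_Zpd) auto
  moreover have "trunc k (liftM p a) = a" using a by (auto simp: trunc_def liftM_def fun_eq_iff)
  ultimately show "a \<in> mcar (MM k)" unfolding mcar_Mmod by (metis image_eqI)
qed

lemma mcar_mod: "a \<in> mcar (MM k) \<Longrightarrow> a i mod int p ^ k = a i"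
  by (simp add: mcar_iff)

lemma mcar_high: "a \<in> mcar (MM k) \<Longrightarrow> d \<le> i \<Longrightarrow> a i = 0"
  by (simp add: mcar_iff)

lemma M_eqI: "a \<in> mcar (MM k) \<Longrightarrow> b \<in> mcar (MM k) \<Longrightarrow> (\<And>i. a i mod int p ^ k = b i mod int p ^ k) \<Longrightarrow> a = b"
  by (auto simp: mcar_mod fun_eq_iff)

lemma liftMZ[simp]: "a \<in> mcar (MM k) \<Longrightarrow> liftM p a \<in> Zpd p d"
  by (rule liftM_Zpd) (simp add: mcar_iff)

lemma trunc_lift[simp]: "a \<in> mcar (MM k) \<Longrightarrow> trunc k (liftM p a) = a"
  by (auto simp: trunc_def liftM_def fun_eq_iff mcar_mod)

lemma truncM[simp]: "v \<in> Zpd p d \<Longrightarrow> trunc k v \<in> mcar (MM k)"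
  unfolding mcar_Mmod by (rule imageI)

lemma liftM_trunc_Z[simp]: "v \<in> Zpd p d \<Longrightarrow> liftM p (trunc k v) \<in> Zpd p d"
  using liftM_Zpd[of "trunc k v"] Zpd_high[of v p d] by (auto simp: trunc_def)

lemma mact_trunc: "v \<in> Zpd p d \<Longrightarrow> g \<in> carrier P \<Longrightarrow> mact (MM k) (trunc k v) g = trunc k (act v g)"
proof -
  assume v: "v \<in> Zpd p d" and g: "g \<in> carrier P"
  have "act (liftM p (trunc k v)) g i k = act v g i k" for i
    by (rule act_level[OF liftM_trunc_Z[OF v] v g]) (simp add: liftM_def trunc_def Zpd_mod[OF v])
  then show ?thesis by (auto simp: Mmod_def trunc_def fun_eq_iff)
qed

lemma madd_trunc: "madd (MM k) (trunc k v) (trunc k w) = trunc k (zadd p v w)"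
  by (simp add: Mmod_def trunc_def zadd_def)
lemma mneg_trunc: "mneg (MM k) (trunc k v) = trunc k (zneg p v)"
  by (simp add: Mmod_def trunc_def zneg_def)
lemma mzero_trunc: "mzero (MM k) = trunc k (\<lambda>i n. 0)"
  by (simp add: Mmod_def trunc_def)

lemma Mrep: "a \<in> mcar (MM k) \<Longrightarrow> \<exists>v\<in>Zpd p d. a = trunc k v"
  unfolding mcar_Mmod by blast

lemma madd_app: "madd (MM k) a b i = (a i + b i) mod int p ^ k"
  by (simp add: Mmod_def)
lemma mneg_app: "mneg (MM k) a i = (- a i) mod int p ^ k"
  by (simp add: Mmod_def)
lemma mzero_app: "mzero (MM k) i = 0"
  by (simp add: Mmod_def)


lemma maddM[simp]: "a \<in> mcar (MM k) \<Longrightarrow> b \<in> mcar (MM k) \<Longrightarrow> madd (MM k) a b \<in> mcar (MM k)"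
  using p_pos by (simp add: mcar_iff madd_app)
lemma mnegM[simp]: "a \<in> mcar (MM k) \<Longrightarrow> mneg (MM k) a \<in> mcar (MM k)"
  using p_pos by (simp add: mcar_iff mneg_app)
lemma mzeroM[simp]: "mzero (MM k) \<in> mcar (MM k)"
  by (simp add: mzero_trunc)
lemma mactM[simp]: "a \<in> mcar (MM k) \<Longrightarrow> g \<in> carrier P \<Longrightarrow> mact (MM k) a g \<in> mcar (MM k)"
proof -
  assume "a \<in> mcar (MM k)" "g \<in> carrier P"
  then obtain v where "v \<in> Zpd p d" "a = trunc k v" using Mrep by blast
  then show ?thesis using \<open>g \<in> carrier P\<close> by (simp add: mact_trunc)
qed

lemma mact_madd: "a \<in> mcar (MM k) \<Longrightarrow> b \<in> mcar (MM k) \<Longrightarrow> g \<in> carrier P \<Longrightarrow>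
   mact (MM k) (madd (MM k) a b) g = madd (MM k) (mact (MM k) a g) (mact (MM k) b g)"
proof -
  assume "a \<in> mcar (MM k)" "b \<in> mcar (MM k)" and g: "g \<in> carrier P"
  then obtain v w where "v \<in> Zpd p d" "a = trunc k v" "w \<in> Zpd p d" "b = trunc k w" using Mrep by metis
  then show ?thesis using g by (simp add: mact_trunc madd_trunc act_zadd)
qed

lemma mact_mneg: "a \<in> mcar (MM k) \<Longrightarrow> g \<in> carrier P \<Longrightarrow>
   mact (MM k) (mneg (MM k) a) g = mneg (MM k) (mact (MM k) a g)"
proof -
  assume "a \<in> mcar (MM k)" and g: "g \<in> carrier P"
  then obtain v where "v \<in> Zpd p d" "a = trunc k v" using Mrep by blast
  then show ?thesis using g by (simp add: mact_trunc mneg_trunc act_zneg)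
qed

lemma mact_mzero: "g \<in> carrier P \<Longrightarrow> mact (MM k) (mzero (MM k)) g = mzero (MM k)"
  by (simp add: mzero_trunc mact_trunc act_zero)

lemma P_one[simp]: "\<one>\<^bsub>P\<^esub> \<in> carrier P"
  using monoid.one_closed[OF group.is_monoid[OF P_group]] .
lemma P_mult[simp]: "g \<in> carrier P \<Longrightarrow> h \<in> carrier P \<Longrightarrow> g \<otimes>\<^bsub>P\<^esub> h \<in> carrier P"
  using monoid.m_closed[OF group.is_monoid[OF P_group]] .

lemma mact_one[simp]: "a \<in> mcar (MM k) \<Longrightarrow> mact (MM k) a \<one>\<^bsub>P\<^esub> = a"
proof -
  assume "a \<in> mcar (MM k)"
  then obtain v where "v \<in> Zpd p d" "a = trunc k v" using Mrep by blast
  then show ?thesis by (simp add: mact_trunc)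
qed

lemma mact_mact: "a \<in> mcar (MM k) \<Longrightarrow> g \<in> carrier P \<Longrightarrow> h \<in> carrier P \<Longrightarrow>
   mact (MM k) (mact (MM k) a g) h = mact (MM k) a (g \<otimes>\<^bsub>P\<^esub> h)"
proof -
  assume "a \<in> mcar (MM k)" and g: "g \<in> carrier P" and h: "h \<in> carrier P"
  then obtain v where "v \<in> Zpd p d" "a = trunc k v" using Mrep by blast
  then show ?thesis using g h by (simp add: mact_trunc act_act)
qed

lemma mod_sub: "(x::int) mod Q = y mod Q \<Longrightarrow> (x + r) mod Q = (y + r) mod Q"
  by (rule mod_add_cong) auto

lemma assoc_modQ: "((T1::int) + T2) mod Q = (T3 + T4) mod Q \<Longrightarrow>
  ((((A + B) mod Q + T1) mod Q + C) mod Q + T2) mod Q = ((A + ((B + C) mod Q + T3) mod Q) mod Q + T4) mod Q"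
proof -
  assume h: "(T1 + T2) mod Q = (T3 + T4) mod Q"
  have "((((A + B) mod Q + T1) mod Q + C) mod Q + T2) mod Q = ((T1 + T2) + (A + B + C)) mod Q"
    by (simp add: mod_simps ac_simps)
  also have "\<dots> = ((T3 + T4) + (A + B + C)) mod Q" using h by (rule mod_sub)
  also have "\<dots> = ((A + ((B + C) mod Q + T3) mod Q) mod Q + T4) mod Q"
    by (simp add: mod_simps ac_simps)
  finally show ?thesis .
qed

lemma Z2_D:
  assumes "\<tau> \<in> Z2 P (carrier P) A"
  shows "\<And>g h. g \<in> carrier P \<Longrightarrow> h \<in> carrier P \<Longrightarrow> \<tau> g h \<in> mcar A"
    and "\<And>g. \<tau> \<one>\<^bsub>P\<^esub> g = mzero A" and "\<And>g. \<tau> g \<one>\<^bsub>P\<^esub> = mzero A"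
    and "\<And>g h l. g \<in> carrier P \<Longrightarrow> h \<in> carrier P \<Longrightarrow> l \<in> carrier P \<Longrightarrow>
      madd A (mact A (\<tau> g h) l) (\<tau> (g \<otimes>\<^bsub>P\<^esub> h) l) = madd A (\<tau> h l) (\<tau> g (h \<otimes>\<^bsub>P\<^esub> l))"
  using assms unfolding Z2_def cochain2_def by auto

lemma ext_carrier: "carrier (ext_group P A \<tau>) = carrier P \<times> mcar A"
  by (simp add: ext_group_def)
lemma ext_mult: "(g, a) \<otimes>\<^bsub>ext_group P A \<tau>\<^esub> (h, b) = (g \<otimes>\<^bsub>P\<^esub> h, madd A (madd A (mact A a h) b) (\<tau> g h))"
  by (simp add: ext_group_def)
lemma ext_one: "\<one>\<^bsub>ext_group P A \<tau>\<^esub> = (\<one>\<^bsub>P\<^esub>, mzero A)"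
  by (simp add: ext_group_def)

lemma P_assoc: "g \<in> carrier P \<Longrightarrow> h \<in> carrier P \<Longrightarrow> l \<in> carrier P \<Longrightarrow>
   g \<otimes>\<^bsub>P\<^esub> h \<otimes>\<^bsub>P\<^esub> l = g \<otimes>\<^bsub>P\<^esub> (h \<otimes>\<^bsub>P\<^esub> l)"
  using monoid.m_assoc[OF group.is_monoid[OF P_group]] by blast
lemma P_lone[simp]: "g \<in> carrier P \<Longrightarrow> \<one>\<^bsub>P\<^esub> \<otimes>\<^bsub>P\<^esub> g = g"
  using monoid.l_one[OF group.is_monoid[OF P_group]] by blast
lemma P_rone[simp]: "g \<in> carrier P \<Longrightarrow> g \<otimes>\<^bsub>P\<^esub> \<one>\<^bsub>P\<^esub> = g"
  using monoid.r_one[OF group.is_monoid[OF P_group]] by blast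
lemma P_inv[simp]: "g \<in> carrier P \<Longrightarrow> inv\<^bsub>P\<^esub> g \<in> carrier P"
  using group.inv_closed[OF P_group] by blast
lemma P_linv[simp]: "g \<in> carrier P \<Longrightarrow> inv\<^bsub>P\<^esub> g \<otimes>\<^bsub>P\<^esub> g = \<one>\<^bsub>P\<^esub>"
  using group.l_inv[OF P_group] by blast

lemma ext_group_M:
  assumes tau: "\<tau> \<in> Z2 P (carrier P) (MM k)"
  shows "group (ext_group P (MM k) \<tau>)"
proof (rule groupI)
  let ?G = "ext_group P (MM k) \<tau>"
  note tc = Z2_D[OF tau]
  show "\<one>\<^bsub>?G\<^esub> \<in> carrier ?G" by (simp add: ext_carrier ext_one)
  show "x \<otimes>\<^bsub>?G\<^esub> y \<in> carrier ?G" if "x \<in> carrier ?G" "y \<in> carrier ?G" for x y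
    using that tc(1) by (auto simp: ext_carrier ext_mult)
  show "\<one>\<^bsub>?G\<^esub> \<otimes>\<^bsub>?G\<^esub> x = x" if hx: "x \<in> carrier ?G" for x
  proof -
    obtain g a where x: "x = (g, a)" "g \<in> carrier P" "a \<in> mcar (MM k)" using hx by (auto simp: ext_carrier)
    have "madd (MM k) (madd (MM k) (mact (MM k) (mzero (MM k)) g) a) (\<tau> \<one>\<^bsub>P\<^esub> g) = a"
      using x by (intro M_eqI) (simp_all add: mact_mzero tc(2) madd_app mzero_app mcar_mod)
    then show ?thesis using x by (simp add: ext_one ext_mult)
  qed
  show "\<exists>y\<in>carrier ?G. y \<otimes>\<^bsub>?G\<^esub> x = \<one>\<^bsub>?G\<^esub>" if hx: "x \<in> carrier ?G" for x
  proof -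
    obtain g a where x: "x = (g, a)" "g \<in> carrier P" "a \<in> mcar (MM k)" using hx by (auto simp: ext_carrier)
    define b where "b = madd (MM k) a (\<tau> (inv\<^bsub>P\<^esub> g) g)"
    define u where "u = mact (MM k) (mneg (MM k) b) (inv\<^bsub>P\<^esub> g)"
    have bM: "b \<in> mcar (MM k)" using x tc(1) by (simp add: b_def)
    have uM: "u \<in> mcar (MM k)" using x bM by (simp add: u_def)
    have "mact (MM k) u g = mneg (MM k) b" using x bM by (simp add: u_def mact_mact)
    then have "madd (MM k) (madd (MM k) (mact (MM k) u g) a) (\<tau> (inv\<^bsub>P\<^esub> g) g) = mzero (MM k)"
      by (simp add: b_def fun_eq_iff madd_app mneg_app mzero_app mod_simps)
    then have "(inv\<^bsub>P\<^esub> g, u) \<otimes>\<^bsub>?G\<^esub> x = \<one>\<^bsub>?G\<^esub>" using x by (simp add: ext_mult ext_one)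
    moreover have "(inv\<^bsub>P\<^esub> g, u) \<in> carrier ?G" using x uM by (simp add: ext_carrier)
    ultimately show ?thesis by blast
  qed
  show "x \<otimes>\<^bsub>?G\<^esub> y \<otimes>\<^bsub>?G\<^esub> z = x \<otimes>\<^bsub>?G\<^esub> (y \<otimes>\<^bsub>?G\<^esub> z)"
    if hxyz: "x \<in> carrier ?G" "y \<in> carrier ?G" "z \<in> carrier ?G" for x y z
  proof -
    obtain g a where x: "x = (g, a)" "g \<in> carrier P" "a \<in> mcar (MM k)" using hxyz by (auto simp: ext_carrier)
    obtain h b where y: "y = (h, b)" "h \<in> carrier P" "b \<in> mcar (MM k)" using hxyz by (auto simp: ext_carrier)
    obtain l c where z: "z = (l, c)" "l \<in> carrier P" "c \<in> mcar (MM k)" using hxyz by (auto simp: ext_carrier)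
    have cc: "madd (MM k) (mact (MM k) (\<tau> g h) l) (\<tau> (g \<otimes>\<^bsub>P\<^esub> h) l) i = madd (MM k) (\<tau> h l) (\<tau> g (h \<otimes>\<^bsub>P\<^esub> l)) i" for i
      using tc(4)[OF x(2) y(2) z(2)] by simp
    have "madd (MM k) (madd (MM k) (mact (MM k) (madd (MM k) (madd (MM k) (mact (MM k) a h) b) (\<tau> g h)) l) c) (\<tau> (g \<otimes>\<^bsub>P\<^esub> h) l)
        = madd (MM k) (madd (MM k) (mact (MM k) a (h \<otimes>\<^bsub>P\<^esub> l)) (madd (MM k) (madd (MM k) (mact (MM k) b l) c) (\<tau> h l))) (\<tau> g (h \<otimes>\<^bsub>P\<^esub> l))"
      (is "?L = ?R")
    proof -
      have e1: "mact (MM k) (madd (MM k) (madd (MM k) (mact (MM k) a h) b) (\<tau> g h)) l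
          = madd (MM k) (madd (MM k) (mact (MM k) a (h \<otimes>\<^bsub>P\<^esub> l)) (mact (MM k) b l)) (mact (MM k) (\<tau> g h) l)"
        using x y z tc(1) by (simp add: mact_madd mact_mact)
      have "?L i = ?R i" for i
        unfolding e1 madd_app
        by (rule assoc_modQ) (use cc[of i] in \<open>simp only: madd_app\<close>)
      then show ?thesis by auto
    qed
    then show ?thesis using x y z by (simp add: ext_mult P_assoc)
  qed
qed

end

locale gset = tset +
  fixes k :: nat and \<tau>
  assumes tau: "\<tau> \<in> Z2 P (carrier P) (MM k)"
    and p_prime: "Factorial_Ring.prime p"
    and P_fin: "finite (carrier P)"
begin

abbreviation "G \<equiv> ext_group P (MM k) \<tau>"

lemma G_group: "group G"
  by (rule ext_group_M[OF tau])

interpretation Pg: group P by (rule P_group)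
interpretation Gg: group G by (rule G_group)

lemma fst_mult: "fst (x \<otimes>\<^bsub>G\<^esub> y) = fst x \<otimes>\<^bsub>P\<^esub> fst y"
  by (cases x; cases y) (simp add: ext_mult)

lemma fst_one: "fst \<one>\<^bsub>G\<^esub> = \<one>\<^bsub>P\<^esub>"
  by (simp add: ext_one)

lemma fst_carrier: "x \<in> carrier G \<Longrightarrow> fst x \<in> carrier P"
  by (auto simp: ext_carrier)

lemma fst_pow: "x \<in> carrier G \<Longrightarrow> fst (x [^]\<^bsub>G\<^esub> (n::nat)) = fst x [^]\<^bsub>P\<^esub> n"
  by (induction n) (simp_all add: fst_one fst_mult)

lemma fst_inv: "x \<in> carrier G \<Longrightarrow> fst (inv\<^bsub>G\<^esub> x) = inv\<^bsub>P\<^esub> (fst x)"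
proof -
  assume x: "x \<in> carrier G"
  have "fst (inv\<^bsub>G\<^esub> x) \<otimes>\<^bsub>P\<^esub> fst x = \<one>\<^bsub>P\<^esub>"
    using x by (simp flip: fst_mult add: fst_one)
  then show ?thesis using x by (intro Pg.inv_equality[symmetric]) (auto intro: fst_carrier)
qed

lemma elem_ab_image:
  assumes E: "elem_ab p G E"
  shows "elem_ab p P (fst ` E)"
proof -
  have sE: "subgroup E G" and cE: "\<And>x y. x \<in> E \<Longrightarrow> y \<in> E \<Longrightarrow> x \<otimes>\<^bsub>G\<^esub> y = y \<otimes>\<^bsub>G\<^esub> x"
    and eE: "\<And>x. x \<in> E \<Longrightarrow> x [^]\<^bsub>G\<^esub> p = \<one>\<^bsub>G\<^esub>"
    using E unfolding elem_ab_def by auto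
  have EG: "E \<subseteq> carrier G" using sE by (rule subgroup.subset)
  have "subgroup (fst ` E) P"
  proof (rule Pg.subgroupI)
    show "fst ` E \<subseteq> carrier P" using EG fst_carrier by auto
    show "fst ` E \<noteq> {}" using subgroup.one_closed[OF sE] by auto
    show "inv\<^bsub>P\<^esub> a \<in> fst ` E" if ha: "a \<in> fst ` E" for a
    proof -
      obtain e where e: "e \<in> E" "a = fst e" using ha by blast
      then have "inv\<^bsub>P\<^esub> a = fst (inv\<^bsub>G\<^esub> e)" using EG fst_inv[of e] by auto
      then show ?thesis using subgroup.m_inv_closed[OF sE e(1)] by blast
    qed
    show "a \<otimes>\<^bsub>P\<^esub> b \<in> fst ` E" if "a \<in> fst ` E" "b \<in> fst ` E" for a b
      using that subgroup.m_closed[OF sE] fst_mult by (metis (no_types, lifting) image_iff)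
  qed
  moreover have "\<forall>x\<in>fst ` E. \<forall>y\<in>fst ` E. x \<otimes>\<^bsub>P\<^esub> y = y \<otimes>\<^bsub>P\<^esub> x"
    using cE by (auto simp flip: fst_mult)
  moreover have "\<forall>x\<in>fst ` E. x [^]\<^bsub>P\<^esub> p = \<one>\<^bsub>P\<^esub>"
  proof
    fix a assume "a \<in> fst ` E"
    then obtain e where e: "e \<in> E" "a = fst e" by blast
    have "fst (e [^]\<^bsub>G\<^esub> p) = fst e [^]\<^bsub>P\<^esub> p" using e EG fst_pow by blast
    then show "a [^]\<^bsub>P\<^esub> p = \<one>\<^bsub>P\<^esub>" using eE[OF e(1)] e(2) fst_one by simp
  qed
  ultimately show ?thesis unfolding elem_ab_def by blast
qed

lemma subgroup_pow_closed: "subgroup E G \<Longrightarrow> e \<in> E \<Longrightarrow> e [^]\<^bsub>G\<^esub> (n::nat) \<in> E"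
  by (induction n) (auto intro: subgroup.one_closed subgroup.m_closed)

lemma pow_p_dvd: "e \<in> carrier G \<Longrightarrow> e [^]\<^bsub>G\<^esub> p = \<one>\<^bsub>G\<^esub> \<Longrightarrow> p dvd i \<Longrightarrow> e [^]\<^bsub>G\<^esub> (i::nat) = \<one>\<^bsub>G\<^esub>"
  by (auto simp: Gg.nat_pow_pow[symmetric])

lemma complement:
  assumes E: "elem_ab p G E"
  shows "\<exists>C. subgroup C G \<and> C \<subseteq> E \<and> (\<forall>c\<in>C. fst c = \<one>\<^bsub>P\<^esub> \<longrightarrow> c = \<one>\<^bsub>G\<^esub>) \<and> fst ` C = fst ` E"
proof -
  have sE: "subgroup E G" and cE: "\<And>x y. x \<in> E \<Longrightarrow> y \<in> E \<Longrightarrow> x \<otimes>\<^bsub>G\<^esub> y = y \<otimes>\<^bsub>G\<^esub> x"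
    and eE: "\<And>x. x \<in> E \<Longrightarrow> x [^]\<^bsub>G\<^esub> p = \<one>\<^bsub>G\<^esub>"
    using E unfolding elem_ab_def by auto
  have EG: "E \<subseteq> carrier G" using sE by (rule subgroup.subset)
  define S where "S = {C. subgroup C G \<and> C \<subseteq> E \<and> (\<forall>c\<in>C. fst c = \<one>\<^bsub>P\<^esub> \<longrightarrow> c = \<one>\<^bsub>G\<^esub>)}"
  have S1: "{\<one>\<^bsub>G\<^esub>} \<in> S"
    unfolding S_def using Gg.triv_subgroup subgroup.one_closed[OF sE] by auto
  have Sb: "\<forall>C. C \<in> S \<longrightarrow> card (fst ` C) < Suc (card (carrier P))"
  proof (intro allI impI)
    fix C assume "C \<in> S"
    then have "fst ` C \<subseteq> carrier P" unfolding S_def using EG fst_carrier by blast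
    then show "card (fst ` C) < Suc (card (carrier P))" using P_fin card_mono[of "carrier P" "fst ` C"] by simp
  qed
  obtain C where C: "C \<in> S" and Cmax: "\<And>C'. C' \<in> S \<Longrightarrow> card (fst ` C') \<le> card (fst ` C)"
    using Lattices_Big.ex_has_greatest_nat[of "\<lambda>C. C \<in> S", OF S1 Sb] by blast
  have sC: "subgroup C G" and CE: "C \<subseteq> E" and CN: "\<And>c. c \<in> C \<Longrightarrow> fst c = \<one>\<^bsub>P\<^esub> \<Longrightarrow> c = \<one>\<^bsub>G\<^esub>"
    using C unfolding S_def by auto
  have "fst ` C = fst ` E"
  proof (rule ccontr)
    assume ne: "fst ` C \<noteq> fst ` E"
    then obtain e where e: "e \<in> E" "fst e \<notin> fst ` C" using CE by blast
    have eG: "e \<in> carrier G" using e EG by blast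
    define C' where "C' = {c \<otimes>\<^bsub>G\<^esub> e [^]\<^bsub>G\<^esub> i | c i. c \<in> C \<and> (i::nat) \<ge> 0}"
    have cG: "c \<in> carrier G" if "c \<in> C" for c using that CE EG by blast
    have epowE: "e [^]\<^bsub>G\<^esub> (i::nat) \<in> E" for i using subgroup_pow_closed[OF sE e(1)] .
    have C'E: "C' \<subseteq> E"
      unfolding C'_def using CE epowE subgroup.m_closed[OF sE] by blast
    have C'sub: "subgroup C' G"
    proof (rule Gg.subgroupI)
      show "C' \<subseteq> carrier G" using C'E EG by blast
      show "C' \<noteq> {}" unfolding C'_def using subgroup.one_closed[OF sC] by blast
      show "a \<otimes>\<^bsub>G\<^esub> b \<in> C'" if ha: "a \<in> C'" "b \<in> C'" for a b
      proof -
        obtain c i where a: "a = c \<otimes>\<^bsub>G\<^esub> e [^]\<^bsub>G\<^esub> (i::nat)" "c \<in> C" using ha(1) unfolding C'_def by blast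
        obtain c' j where b: "b = c' \<otimes>\<^bsub>G\<^esub> e [^]\<^bsub>G\<^esub> (j::nat)" "c' \<in> C" using ha(2) unfolding C'_def by blast
        have "a \<otimes>\<^bsub>G\<^esub> b = c \<otimes>\<^bsub>G\<^esub> (e [^]\<^bsub>G\<^esub> i \<otimes>\<^bsub>G\<^esub> (c' \<otimes>\<^bsub>G\<^esub> e [^]\<^bsub>G\<^esub> j))"
          using a b cG eG by (simp add: Gg.m_assoc)
        also have "\<dots> = c \<otimes>\<^bsub>G\<^esub> ((c' \<otimes>\<^bsub>G\<^esub> e [^]\<^bsub>G\<^esub> j) \<otimes>\<^bsub>G\<^esub> e [^]\<^bsub>G\<^esub> i)"
        proof -
          have "c' \<otimes>\<^bsub>G\<^esub> e [^]\<^bsub>G\<^esub> j \<in> E" using b CE epowE subgroup.m_closed[OF sE] by blast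
          then show ?thesis using cE[OF epowE[of i], of "c' \<otimes>\<^bsub>G\<^esub> e [^]\<^bsub>G\<^esub> j"] by simp
        qed
        also have "\<dots> = (c \<otimes>\<^bsub>G\<^esub> c') \<otimes>\<^bsub>G\<^esub> e [^]\<^bsub>G\<^esub> (j + i)"
          using a b cG eG by (simp add: Gg.m_assoc Gg.nat_pow_mult)
        finally show ?thesis unfolding C'_def using subgroup.m_closed[OF sC a(2) b(2)] by blast
      qed
      show "inv\<^bsub>G\<^esub> a \<in> C'" if ha: "a \<in> C'" for a
      proof -
        obtain c i where a: "a = c \<otimes>\<^bsub>G\<^esub> e [^]\<^bsub>G\<^esub> (i::nat)" "c \<in> C" using ha unfolding C'_def by blast
        have ie: "inv\<^bsub>G\<^esub> (e [^]\<^bsub>G\<^esub> i) = e [^]\<^bsub>G\<^esub> (i * (p - 1))"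
        proof (rule Gg.inv_equality)
          have "e [^]\<^bsub>G\<^esub> (i * (p - 1)) \<otimes>\<^bsub>G\<^esub> e [^]\<^bsub>G\<^esub> i = e [^]\<^bsub>G\<^esub> (i * (p - 1) + i)"
            using eG by (simp add: Gg.nat_pow_mult)
          also have "i * (p - 1) + i = p * i" using p_pos by (cases p) (auto simp: algebra_simps)
          finally show "e [^]\<^bsub>G\<^esub> (i * (p - 1)) \<otimes>\<^bsub>G\<^esub> e [^]\<^bsub>G\<^esub> i = \<one>\<^bsub>G\<^esub>"
            using pow_p_dvd[OF eG eE[OF e(1)], of "p * i"] by simp
        qed (use eG in auto)
        have "inv\<^bsub>G\<^esub> a = inv\<^bsub>G\<^esub> (e [^]\<^bsub>G\<^esub> i) \<otimes>\<^bsub>G\<^esub> inv\<^bsub>G\<^esub> c"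
          using a cG eG by (simp add: Gg.inv_mult_group)
        also have "\<dots> = inv\<^bsub>G\<^esub> c \<otimes>\<^bsub>G\<^esub> e [^]\<^bsub>G\<^esub> (i * (p - 1))"
          unfolding ie using cE[OF epowE subgroup.m_inv_closed[OF sE]] a CE by blast
        finally show ?thesis unfolding C'_def using subgroup.m_inv_closed[OF sC a(2)] by blast
      qed
    qed
    have C'N: "\<forall>a\<in>C'. fst a = \<one>\<^bsub>P\<^esub> \<longrightarrow> a = \<one>\<^bsub>G\<^esub>"
    proof (intro ballI impI)
      fix a assume ha: "a \<in> C'" and fa: "fst a = \<one>\<^bsub>P\<^esub>"
      obtain c i where a: "a = c \<otimes>\<^bsub>G\<^esub> e [^]\<^bsub>G\<^esub> (i::nat)" "c \<in> C" using ha unfolding C'_def by blast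
      have fc: "fst c \<in> carrier P" using cG[OF a(2)] fst_carrier by blast
      have fe: "fst e \<in> carrier P" using eG fst_carrier by blast
      have rel: "fst c \<otimes>\<^bsub>P\<^esub> fst e [^]\<^bsub>P\<^esub> i = \<one>\<^bsub>P\<^esub>"
        using fa a eG by (simp add: fst_mult fst_pow)
      show "a = \<one>\<^bsub>G\<^esub>"
      proof (cases "p dvd i")
        case True
        then have "e [^]\<^bsub>G\<^esub> i = \<one>\<^bsub>G\<^esub>" using pow_p_dvd[OF eG eE[OF e(1)]] by blast
        then have "a = c" using a cG by simp
        then show ?thesis using CN a(2) fa by blast
      next
        case False
        then have i0: "i \<noteq> 0" by (metis dvd_0_right)
        have "coprime p i" using prime_imp_coprime[OF p_prime False] .
        then have "gcd i p = 1" by (simp add: coprime_iff_gcd_eq_1 gcd.commute)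
        then obtain x y where xy: "i * x = p * y + 1" using bezout_nat[OF i0, of p] by auto
        have fep: "fst e [^]\<^bsub>P\<^esub> p = \<one>\<^bsub>P\<^esub>" using eE[OF e(1)] eG by (simp flip: fst_pow add: fst_one)
        have "fst e [^]\<^bsub>P\<^esub> (i * x) = fst e"
          unfolding xy using fe fep by (simp add: Pg.nat_pow_mult[symmetric] Pg.nat_pow_pow[symmetric])
        moreover have "fst e [^]\<^bsub>P\<^esub> i = inv\<^bsub>P\<^esub> fst c"
          using rel fc fe by (metis Pg.inv_equality Pg.inv_comm Pg.nat_pow_closed)
        ultimately have "fst e = (inv\<^bsub>P\<^esub> fst c) [^]\<^bsub>P\<^esub> x"
          using fe by (simp add: Pg.nat_pow_pow[symmetric])
        also have "\<dots> = fst ((inv\<^bsub>G\<^esub> c) [^]\<^bsub>G\<^esub> x)"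
          using cG[OF a(2)] by (simp add: fst_pow fst_inv)
        finally have "fst e \<in> fst ` C"
          using subgroup_pow_closed[OF sC subgroup.m_inv_closed[OF sC a(2)]] by blast
        then show ?thesis using e(2) by blast
      qed
    qed
    have "C' \<in> S" unfolding S_def using C'sub C'E C'N by blast
    moreover have "fst ` C \<subset> fst ` C'"
    proof
      show "fst ` C \<subseteq> fst ` C'"
      proof
        fix a assume "a \<in> fst ` C"
        then obtain c where c: "c \<in> C" "a = fst c" by blast
        have "c = c \<otimes>\<^bsub>G\<^esub> e [^]\<^bsub>G\<^esub> (0::nat)" using cG[OF c(1)] by simp
        then have "c \<in> C'" unfolding C'_def using c(1) by blast
        then show "a \<in> fst ` C'" using c(2) by blast
      qed
      have "e = \<one>\<^bsub>G\<^esub> \<otimes>\<^bsub>G\<^esub> e [^]\<^bsub>G\<^esub> (1::nat)" using eG by simp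
      then have "e \<in> C'" unfolding C'_def using subgroup.one_closed[OF sC] by blast
      then show "fst ` C \<noteq> fst ` C'" using e(2) by blast
    qed
    moreover have "finite (fst ` C')"
      using C'E EG fst_carrier P_fin by (meson finite_subset image_subsetI subsetD)
    ultimately have "card (fst ` C) < card (fst ` C')" by (simp add: psubset_card_mono)
    with Cmax[OF \<open>C' \<in> S\<close>] show False by simp
  qed
  then show ?thesis using sC CE CN by blast
qed

lemmas tc = Z2_D[OF tau]

lemma Psub_pow_closed: "subgroup L P \<Longrightarrow> l \<in> L \<Longrightarrow> l [^]\<^bsub>P\<^esub> (n::nat) \<in> L"
  by (induction n) (auto intro: subgroup.one_closed subgroup.m_closed)

lemma graph_mult:
  assumes "l \<in> carrier P" "l' \<in> carrier P"
    and "cf (l \<otimes>\<^bsub>P\<^esub> l') = madd (MM k) (madd (MM k) (mact (MM k) (cf l) l') (cf l')) (\<tau> l l')"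
  shows "(l, cf l) \<otimes>\<^bsub>G\<^esub> (l', cf l') = (l \<otimes>\<^bsub>P\<^esub> l', cf (l \<otimes>\<^bsub>P\<^esub> l'))"
  using assms by (simp add: ext_mult)

lemma graph_elem_ab:
  assumes L: "elem_ab p P L" and cfM: "\<And>l. l \<in> L \<Longrightarrow> cf l \<in> mcar (MM k)"
    and cf1: "cf \<one>\<^bsub>P\<^esub> = mzero (MM k)"
    and rel: "\<And>l l'. l \<in> L \<Longrightarrow> l' \<in> L \<Longrightarrow>
       cf (l \<otimes>\<^bsub>P\<^esub> l') = madd (MM k) (madd (MM k) (mact (MM k) (cf l) l') (cf l')) (\<tau> l l')"
  shows "elem_ab p G ((\<lambda>l. (l, cf l)) ` L)"
proof -
  have sL: "subgroup L P" and cL: "\<And>x y. x \<in> L \<Longrightarrow> y \<in> L \<Longrightarrow> x \<otimes>\<^bsub>P\<^esub> y = y \<otimes>\<^bsub>P\<^esub> x"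
    and eL: "\<And>x. x \<in> L \<Longrightarrow> x [^]\<^bsub>P\<^esub> p = \<one>\<^bsub>P\<^esub>"
    using L unfolding elem_ab_def by auto
  have LP: "\<And>l. l \<in> L \<Longrightarrow> l \<in> carrier P" using subgroup.subset[OF sL] by blast
  have gm: "(l, cf l) \<otimes>\<^bsub>G\<^esub> (l', cf l') = (l \<otimes>\<^bsub>P\<^esub> l', cf (l \<otimes>\<^bsub>P\<^esub> l'))" if "l \<in> L" "l' \<in> L" for l l'
    using graph_mult[OF LP[OF that(1)] LP[OF that(2)] rel[OF that]] .
  let ?C = "(\<lambda>l. (l, cf l)) ` L"
  have "subgroup ?C G"
  proof (rule Gg.subgroupI)
    show "?C \<subseteq> carrier G" using LP cfM by (auto simp: ext_carrier)
    show "?C \<noteq> {}" using subgroup.one_closed[OF sL] by blast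
    show "a \<otimes>\<^bsub>G\<^esub> b \<in> ?C" if "a \<in> ?C" "b \<in> ?C" for a b
      using that gm subgroup.m_closed[OF sL] by auto
    show "inv\<^bsub>G\<^esub> a \<in> ?C" if ha: "a \<in> ?C" for a
    proof -
      obtain l where l: "l \<in> L" "a = (l, cf l)" using ha by blast
      have il: "inv\<^bsub>P\<^esub> l \<in> L" using subgroup.m_inv_closed[OF sL l(1)] .
      have "inv\<^bsub>G\<^esub> a = (inv\<^bsub>P\<^esub> l, cf (inv\<^bsub>P\<^esub> l))"
      proof (rule Gg.inv_equality)
        show "(inv\<^bsub>P\<^esub> l, cf (inv\<^bsub>P\<^esub> l)) \<otimes>\<^bsub>G\<^esub> a = \<one>\<^bsub>G\<^esub>"
          using gm[OF il l(1)] l LP cf1 by (simp add: ext_one)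
        show "a \<in> carrier G" using l LP cfM by (auto simp: ext_carrier)
        show "(inv\<^bsub>P\<^esub> l, cf (inv\<^bsub>P\<^esub> l)) \<in> carrier G" using il LP cfM by (auto simp: ext_carrier)
      qed
      then show ?thesis using il by blast
    qed
  qed
  moreover have "\<forall>x\<in>?C. \<forall>y\<in>?C. x \<otimes>\<^bsub>G\<^esub> y = y \<otimes>\<^bsub>G\<^esub> x"
    using gm cL by auto
  moreover have "\<forall>x\<in>?C. x [^]\<^bsub>G\<^esub> p = \<one>\<^bsub>G\<^esub>"
  proof
    fix x assume "x \<in> ?C"
    then obtain l where l: "l \<in> L" "x = (l, cf l)" by blast
    have "x [^]\<^bsub>G\<^esub> (n::nat) = (l [^]\<^bsub>P\<^esub> n, cf (l [^]\<^bsub>P\<^esub> n))" for n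
    proof (induction n)
      case 0 then show ?case using cf1 by (simp add: ext_one)
    next
      case (Suc n)
      then show ?case using gm[OF Psub_pow_closed[OF sL l(1), of n] l(1)] l by simp
    qed
    then show "x [^]\<^bsub>G\<^esub> p = \<one>\<^bsub>G\<^esub>" using eL[OF l(1)] cf1 by (simp add: ext_one)
  qed
  ultimately show ?thesis unfolding elem_ab_def by blast
qed

lemma comm_N:
  assumes l: "l \<in> carrier P" and a: "a \<in> mcar (MM k)" and u: "u \<in> mcar (MM k)"
  shows "(l, a) \<otimes>\<^bsub>G\<^esub> (\<one>\<^bsub>P\<^esub>, u) = (\<one>\<^bsub>P\<^esub>, u) \<otimes>\<^bsub>G\<^esub> (l, a) \<longleftrightarrow> mact (MM k) u l = u"
proof -
  have "(l, a) \<otimes>\<^bsub>G\<^esub> (\<one>\<^bsub>P\<^esub>, u) = (l, madd (MM k) (madd (MM k) a u) (mzero (MM k)))"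
    using l a tc(3) by (simp add: ext_mult)
  moreover have "(\<one>\<^bsub>P\<^esub>, u) \<otimes>\<^bsub>G\<^esub> (l, a) = (l, madd (MM k) (madd (MM k) (mact (MM k) u l) a) (mzero (MM k)))"
    using l tc(2) by (simp add: ext_mult)
  moreover have "madd (MM k) (madd (MM k) a u) (mzero (MM k)) = madd (MM k) (madd (MM k) (mact (MM k) u l) a) (mzero (MM k))
      \<longleftrightarrow> mact (MM k) u l = u"
  proof
    assume h: "madd (MM k) (madd (MM k) a u) (mzero (MM k)) = madd (MM k) (madd (MM k) (mact (MM k) u l) a) (mzero (MM k))"
    show "mact (MM k) u l = u"
    proof (rule M_eqI)
      show "mact (MM k) u l \<in> mcar (MM k)" "u \<in> mcar (MM k)" using l u by auto
      fix i
      have "(a i + u i) mod int p ^ k = (mact (MM k) u l i + a i) mod int p ^ k"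
        using fun_cong[OF h, of i] by (simp add: madd_app mzero_app)
      then have "(a i + u i + - a i) mod int p ^ k = (mact (MM k) u l i + a i + - a i) mod int p ^ k"
        by (rule mod_sub)
      then show "mact (MM k) u l i mod int p ^ k = u i mod int p ^ k" by simp
    qed
  next
    assume "mact (MM k) u l = u"
    then show "madd (MM k) (madd (MM k) a u) (mzero (MM k)) = madd (MM k) (madd (MM k) (mact (MM k) u l) a) (mzero (MM k))"
      by (simp add: fun_eq_iff madd_app add.commute)
  qed
  ultimately show ?thesis by simp
qed

lemma forward_struct:
  assumes E: "elem_ab p G E"
  shows "\<exists>cf. (\<forall>l\<in>fst ` E. cf l \<in> mcar (MM k)) \<and> cf \<one>\<^bsub>P\<^esub> = mzero (MM k)
    \<and> (\<forall>l\<in>fst ` E. \<forall>l'\<in>fst ` E. cf (l \<otimes>\<^bsub>P\<^esub> l') = madd (MM k) (madd (MM k) (mact (MM k) (cf l) l') (cf l')) (\<tau> l l'))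
    \<and> E = ((\<lambda>l. (l, cf l)) ` fst ` E) <#>\<^bsub>G\<^esub> (E \<inter> ({\<one>\<^bsub>P\<^esub>} \<times> mcar (MM k)))
    \<and> (\<forall>l\<in>fst ` E. \<forall>u. (\<one>\<^bsub>P\<^esub>, u) \<in> E \<longrightarrow> mact (MM k) u l = u)"
proof -
  have sE: "subgroup E G" and cE: "\<And>x y. x \<in> E \<Longrightarrow> y \<in> E \<Longrightarrow> x \<otimes>\<^bsub>G\<^esub> y = y \<otimes>\<^bsub>G\<^esub> x"
    using E unfolding elem_ab_def by auto
  have EG: "\<And>x. x \<in> E \<Longrightarrow> x \<in> carrier G" using subgroup.subset[OF sE] by blast
  obtain C where sC: "subgroup C G" and CE: "C \<subseteq> E" and CN: "\<And>c. c \<in> C \<Longrightarrow> fst c = \<one>\<^bsub>P\<^esub> \<Longrightarrow> c = \<one>\<^bsub>G\<^esub>"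
    and CL: "fst ` C = fst ` E"
    using complement[OF E] by blast
  let ?L = "fst ` E"
  have CG: "\<And>c. c \<in> C \<Longrightarrow> c \<in> carrier G" using CE EG by blast
  have uniq: "c = c'" if "c \<in> C" "c' \<in> C" "fst c = fst c'" for c c'
  proof -
    have "inv\<^bsub>G\<^esub> c \<otimes>\<^bsub>G\<^esub> c' \<in> C" using that sC by (simp add: subgroup.m_closed subgroup.m_inv_closed)
    moreover have "fst (inv\<^bsub>G\<^esub> c \<otimes>\<^bsub>G\<^esub> c') = \<one>\<^bsub>P\<^esub>"
      using that CG fst_carrier by (simp add: fst_mult fst_inv)
    ultimately have "inv\<^bsub>G\<^esub> c \<otimes>\<^bsub>G\<^esub> c' = \<one>\<^bsub>G\<^esub>" using CN by blast
    then show ?thesis using that CG by (simp add: Gg.inv_solve_left')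
  qed
  define s where "s l = (THE c. c \<in> C \<and> fst c = l)" for l
  have s: "s l \<in> C \<and> fst (s l) = l" if "l \<in> ?L" for l
  proof -
    have "l \<in> fst ` C" using that CL by simp
    then obtain c where "c \<in> C" "fst c = l" by blast
    then have "\<exists>!c. c \<in> C \<and> fst c = l" using uniq by blast
    then show ?thesis unfolding s_def by (rule theI')
  qed
  define cf where "cf l = snd (s l)" for l
  have seq: "s l = (l, cf l)" if "l \<in> ?L" for l using s[OF that] unfolding cf_def by (cases "s l") auto
  have sL: "subgroup ?L P" using elem_ab_image[OF E] unfolding elem_ab_def by blast
  have LP: "\<And>l. l \<in> ?L \<Longrightarrow> l \<in> carrier P" using subgroup.subset[OF sL] by blast
  have cfM: "\<forall>l\<in>?L. cf l \<in> mcar (MM k)"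
  proof
    fix l assume l: "l \<in> ?L"
    have "s l \<in> carrier G" using s[OF l] CG by blast
    then show "cf l \<in> mcar (MM k)" using seq[OF l] by (simp add: ext_carrier)
  qed
  have one: "\<one>\<^bsub>P\<^esub> \<in> ?L" using subgroup.one_closed[OF sL] .
  have cf1: "cf \<one>\<^bsub>P\<^esub> = mzero (MM k)"
  proof -
    have "s \<one>\<^bsub>P\<^esub> = \<one>\<^bsub>G\<^esub>"
      using uniq[OF conjunct1[OF s[OF one]] subgroup.one_closed[OF sC]] s[OF one] by (simp add: fst_one)
    then show ?thesis using seq[OF one] by (simp add: ext_one)
  qed
  have rel: "\<forall>l\<in>?L. \<forall>l'\<in>?L. cf (l \<otimes>\<^bsub>P\<^esub> l') = madd (MM k) (madd (MM k) (mact (MM k) (cf l) l') (cf l')) (\<tau> l l')"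
  proof (intro ballI)
    fix l l' assume l: "l \<in> ?L" and l': "l' \<in> ?L"
    have ll': "l \<otimes>\<^bsub>P\<^esub> l' \<in> ?L" using subgroup.m_closed[OF sL l l'] .
    have "s l \<otimes>\<^bsub>G\<^esub> s l' \<in> C" using s l l' subgroup.m_closed[OF sC] by blast
    moreover have "fst (s l \<otimes>\<^bsub>G\<^esub> s l') = l \<otimes>\<^bsub>P\<^esub> l'" using s l l' by (simp add: fst_mult)
    ultimately have "s (l \<otimes>\<^bsub>P\<^esub> l') = s l \<otimes>\<^bsub>G\<^esub> s l'"
      using uniq[of "s (l \<otimes>\<^bsub>P\<^esub> l')" "s l \<otimes>\<^bsub>G\<^esub> s l'"] s[OF ll'] by simp
    then show "cf (l \<otimes>\<^bsub>P\<^esub> l') = madd (MM k) (madd (MM k) (mact (MM k) (cf l) l') (cf l')) (\<tau> l l')"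
      using seq[OF l] seq[OF l'] seq[OF ll'] by (simp add: ext_mult)
  qed
  have decomp: "E = ((\<lambda>l. (l, cf l)) ` ?L) <#>\<^bsub>G\<^esub> (E \<inter> ({\<one>\<^bsub>P\<^esub>} \<times> mcar (MM k)))"
  proof
    show "E \<subseteq> ((\<lambda>l. (l, cf l)) ` ?L) <#>\<^bsub>G\<^esub> (E \<inter> ({\<one>\<^bsub>P\<^esub>} \<times> mcar (MM k)))"
    proof
      fix e assume e: "e \<in> E"
      let ?l = "fst e"
      have l: "?l \<in> ?L" using e by blast
      define q where "q = inv\<^bsub>G\<^esub> (s ?l) \<otimes>\<^bsub>G\<^esub> e"
      have slE: "s ?l \<in> E" using s[OF l] CE by blast
      have qE: "q \<in> E" unfolding q_def using slE e sE by (simp add: subgroup.m_closed subgroup.m_inv_closed)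
      have "fst q = \<one>\<^bsub>P\<^esub>" unfolding q_def using s[OF l] EG[OF slE] EG[OF e] fst_carrier
        by (simp add: fst_mult fst_inv)
      then have qN: "q \<in> {\<one>\<^bsub>P\<^esub>} \<times> mcar (MM k)" using EG[OF qE] by (cases q) (auto simp: ext_carrier)
      have "e = s ?l \<otimes>\<^bsub>G\<^esub> q" unfolding q_def using EG[OF slE] EG[OF e]
        by (simp add: Gg.m_assoc[symmetric])
      then show "e \<in> ((\<lambda>l. (l, cf l)) ` ?L) <#>\<^bsub>G\<^esub> (E \<inter> ({\<one>\<^bsub>P\<^esub>} \<times> mcar (MM k)))"
        unfolding set_mult_def using seq[OF l] l qE qN by blast
    qed
    show "((\<lambda>l. (l, cf l)) ` ?L) <#>\<^bsub>G\<^esub> (E \<inter> ({\<one>\<^bsub>P\<^esub>} \<times> mcar (MM k))) \<subseteq> E"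
    proof
      fix x assume "x \<in> ((\<lambda>l. (l, cf l)) ` ?L) <#>\<^bsub>G\<^esub> (E \<inter> ({\<one>\<^bsub>P\<^esub>} \<times> mcar (MM k)))"
      then obtain l q where lq: "l \<in> ?L" "q \<in> E" "x = (l, cf l) \<otimes>\<^bsub>G\<^esub> q" unfolding set_mult_def by blast
      have "(l, cf l) \<in> E" using seq[OF lq(1)] s[OF lq(1)] CE by auto
      then show "x \<in> E" using lq subgroup.m_closed[OF sE] by simp
    qed
  qed
  have centr: "\<forall>l\<in>?L. \<forall>u. (\<one>\<^bsub>P\<^esub>, u) \<in> E \<longrightarrow> mact (MM k) u l = u"
  proof (intro ballI allI impI)
    fix l u assume l: "l \<in> ?L" and u: "(\<one>\<^bsub>P\<^esub>, u) \<in> E"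
    have slE: "(l, cf l) \<in> E" using seq[OF l] s[OF l] CE by auto
    have uM: "u \<in> mcar (MM k)" using EG[OF u] by (simp add: ext_carrier)
    show "mact (MM k) u l = u"
      using comm_N[OF LP[OF l] cfM[rule_format, OF l] uM] cE[OF slE u] by simp
  qed
  show ?thesis using cfM cf1 rel decomp centr by blast
qed

end

context tset
begin

lemma Tmod_simps[simp]: "mcar (Tmod p d act) = Zpd p d" "madd (Tmod p d act) = zadd p"
  "mzero (Tmod p d act) = (\<lambda>i n. 0)" "mneg (Tmod p d act) = zneg p" "mact (Tmod p d act) = act"
  by (simp_all add: Tmod_def)

lemma cobd1_T: "cobd1 P (Tmod p d act) f g h = zadd p (zadd p (f h) (zneg p (f (g \<otimes>\<^bsub>P\<^esub> h)))) (act (f g) h)"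
  by (simp add: cobd1_def msub_def)

lemma cobd2_T: "cobd2 P (Tmod p d act) f g h l =
   zadd p (zadd p (zadd p (f h l) (zneg p (f (g \<otimes>\<^bsub>P\<^esub> h) l))) (f g (h \<otimes>\<^bsub>P\<^esub> l))) (zneg p (act (f g h) l))"
  by (simp add: cobd2_def msub_def)

lemma msub_T: "msub (Tmod p d act) a b = zadd p a (zneg p b)"
  by (simp add: msub_def)

lemma zapp: "zadd p v w i n = (v i n + w i n) mod int p ^ n" "zneg p v i n = (- v i n) mod int p ^ n"
  "zsmul p c v i n = (c * v i n) mod int p ^ n"
  by (simp_all add: zadd_def zneg_def zsmul_def)

end

locale cset = tset +
  fixes L cf rho eta etax m x
  assumes rho: "rho \<in> Z2 P (carrier P) (Tmod p d act)"
    and eta: "eta \<in> Z3 P (carrier P) (Tmod p d act)"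
    and etaxJ: "etax \<in> Jc P p d m act x"
    and etax_eta: "(\<lambda>g h k. msub (Tmod p d act) (conn P p d m act x etax g h k) (eta g h k))
                     \<in> B3 P (carrier P) (Tmod p d act)"
    and Pord: "card (carrier P) = p ^ m"
    and P_fin: "finite (carrier P)"
    and Lsub: "subgroup L P"
    and cfM: "\<And>l. l \<in> L \<Longrightarrow> cf l \<in> mcar (MM (x + 3 * m))"
    and cf1: "cf \<one>\<^bsub>P\<^esub> = mzero (MM (x + 3 * m))"
    and rel: "\<And>l l'. l \<in> L \<Longrightarrow> l' \<in> L \<Longrightarrow> cf (l \<otimes>\<^bsub>P\<^esub> l') =
        madd (MM (x + 3 * m)) (madd (MM (x + 3 * m)) (mact (MM (x + 3 * m)) (cf l) l') (cf l'))
          (madd (MM (x + 3 * m)) (trunc (x + 3 * m) (rho l l')) (etax l l'))"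
begin

abbreviation "kk \<equiv> x + 3 * m"

lemma LP: "l \<in> L \<Longrightarrow> l \<in> carrier P"
  using subgroup.subset[OF Lsub] by blast

lemma L_one[simp]: "\<one>\<^bsub>P\<^esub> \<in> L" using subgroup.one_closed[OF Lsub] .
lemma L_mult[simp]: "l \<in> L \<Longrightarrow> l' \<in> L \<Longrightarrow> l \<otimes>\<^bsub>P\<^esub> l' \<in> L" using subgroup.m_closed[OF Lsub] .

lemma rhoZ[simp]: "g \<in> carrier P \<Longrightarrow> h \<in> carrier P \<Longrightarrow> rho g h \<in> Zpd p d"
  using rho unfolding Z2_def cochain2_def by auto
lemma rho1: "rho \<one>\<^bsub>P\<^esub> g = (\<lambda>i n. 0)" "rho g \<one>\<^bsub>P\<^esub> = (\<lambda>i n. 0)"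
  using rho unfolding Z2_def cochain2_def by auto
lemma rho_out: "g \<notin> carrier P \<or> h \<notin> carrier P \<Longrightarrow> rho g h = (\<lambda>i n. 0)"
  using rho unfolding Z2_def cochain2_def by auto
lemma rho_coc: "g \<in> carrier P \<Longrightarrow> h \<in> carrier P \<Longrightarrow> l \<in> carrier P \<Longrightarrow>
   zadd p (act (rho g h) l) (rho (g \<otimes>\<^bsub>P\<^esub> h) l) = zadd p (rho h l) (rho g (h \<otimes>\<^bsub>P\<^esub> l))"
  using rho unfolding Z2_def by auto

lemma etax_Z2: "etax \<in> Z2 P (carrier P) (MM kk)"
  using etaxJ unfolding Jc_def Mx_def by auto
lemma etaxM[simp]: "g \<in> carrier P \<Longrightarrow> h \<in> carrier P \<Longrightarrow> etax g h \<in> mcar (MM kk)"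
  using Z2_D(1)[OF etax_Z2] by blast

definition "ch l = liftM p (cf l)"
definition "eh g h = liftM p (etax g h)"
definition "dc l l' = zadd p (zadd p (ch l') (zneg p (ch (l \<otimes>\<^bsub>P\<^esub> l')))) (act (ch l) l')"
definition "DD l l' = zadd p (zadd p (rho l l') (eh l l')) (dc l l')"

lemma chZ[simp]: "l \<in> L \<Longrightarrow> ch l \<in> Zpd p d"
  unfolding ch_def using liftMZ[OF cfM] by simp
lemma ehZ[simp]: "g \<in> carrier P \<Longrightarrow> h \<in> carrier P \<Longrightarrow> eh g h \<in> Zpd p d"
  unfolding eh_def using liftMZ[OF etaxM] by simp
lemma dcZ[simp]: "l \<in> L \<Longrightarrow> l' \<in> L \<Longrightarrow> dc l l' \<in> Zpd p d"
  unfolding dc_def using LP by simp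
lemma DDZ[simp]: "l \<in> L \<Longrightarrow> l' \<in> L \<Longrightarrow> DD l l' \<in> Zpd p d"
  unfolding DD_def using LP by simp

lemma ch_app: "ch l i n = cf l i mod int p ^ n"
  by (simp add: ch_def liftM_def)

lemma DD_k: assumes l: "l \<in> L" and l': "l' \<in> L" shows "DD l l' i kk = 0"
proof -
  have ma: "mact (MM kk) (cf l) l' i = act (ch l) l' i kk"
    by (simp add: Mmod_def ch_def trunc_def)
  have r: "cf (l \<otimes>\<^bsub>P\<^esub> l') i = ((act (ch l) l' i kk + cf l' i) mod int p ^ kk + (rho l l' i kk + etax l l' i) mod int p ^ kk) mod int p ^ kk"
    using fun_cong[OF rel[OF l l'], of i] by (simp add: madd_app ma trunc_def)
  show ?thesis
    unfolding DD_def dc_def zapp eh_def liftM_def ch_app r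
    by (simp add: mod_simps algebra_simps)
qed

definition "w l l' = (if l \<in> L \<and> l' \<in> L then (SOME s. s \<in> Zpd p d \<and> DD l l' = zsmul p (int p ^ kk) s) else (\<lambda>i n. 0))"

lemma w_prop: "l \<in> L \<Longrightarrow> l' \<in> L \<Longrightarrow> w l l' \<in> Zpd p d \<and> DD l l' = zsmul p (int p ^ kk) (w l l')"
proof -
  assume l: "l \<in> L" and l': "l' \<in> L"
  have "\<exists>s\<in>Zpd p d. DD l l' = zsmul p (int p ^ kk) s"
    using Zpd_divisible[OF p_pos DDZ[OF l l'] DD_k[OF l l']] .
  then show ?thesis unfolding w_def using l l' by (simp, metis (mono_tags, lifting) someI_ex)
qed

lemma wZ[simp]: "w l l' \<in> Zpd p d"
  using w_prop[of l l'] by (cases "l \<in> L \<and> l' \<in> L") (auto simp: w_def)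

lemma w_eq: "l \<in> L \<Longrightarrow> l' \<in> L \<Longrightarrow> DD l l' = zsmul p (int p ^ kk) (w l l')"
  using w_prop by blast

lemma eh_expr:
  assumes l: "l \<in> L" and l': "l' \<in> L"
  shows "eh l l' = zadd p (zsmul p (int p ^ kk) (w l l')) (zneg p (zadd p (rho l l') (dc l l')))"
proof (rule Zpd_eqI)
  show "eh l l' \<in> Zpd p d" using l l' LP by simp
  show "zadd p (zsmul p (int p ^ kk) (w l l')) (zneg p (zadd p (rho l l') (dc l l'))) \<in> Zpd p d"
    using l l' LP by simp
  fix i n
  have h: "(rho l l' i n + eh l l' i n + dc l l' i n) mod int p ^ n = (int p ^ kk * w l l' i n) mod int p ^ n"
    using fun_cong[OF fun_cong[OF w_eq[OF l l'], of i], of n] unfolding DD_def zapp by (simp add: mod_simps)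
  show "eh l l' i n mod int p ^ n = zadd p (zsmul p (int p ^ kk) (w l l')) (zneg p (zadd p (rho l l') (dc l l'))) i n mod int p ^ n"
    unfolding zapp
    by (simp only: modn, rule modc1[OF h, of _ _ 1], simp add: algebra_simps)
qed

lemma act_dc: "g \<in> L \<Longrightarrow> h \<in> L \<Longrightarrow> l \<in> carrier P \<Longrightarrow>
  act (dc g h) l = zadd p (zadd p (act (ch h) l) (zneg p (act (ch (g \<otimes>\<^bsub>P\<^esub> h)) l))) (act (ch g) (h \<otimes>\<^bsub>P\<^esub> l))"
  unfolding dc_def using LP by (simp add: act_zadd act_zneg act_act)

lemma act_eh: "g \<in> L \<Longrightarrow> h \<in> L \<Longrightarrow> l \<in> carrier P \<Longrightarrow>
  act (eh g h) l = zadd p (zsmul p (int p ^ kk) (act (w g h) l)) (zneg p (zadd p (act (rho g h) l) (act (dc g h) l)))"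
  using LP by (simp add: eh_expr act_zadd act_zneg act_zsmul)

lemma cobd2_eh:
  assumes g: "g \<in> L" and h: "h \<in> L" and l: "l \<in> L"
  shows "cobd2 P (Tmod p d act) eh g h l = zsmul p (int p ^ kk) (cobd2 P (Tmod p d act) w g h l)"
proof (rule Zpd_eqI)
  note gP = LP[OF g] and hP = LP[OF h] and lP = LP[OF l]
  show "cobd2 P (Tmod p d act) eh g h l \<in> Zpd p d" using g h l gP hP lP by (simp add: cobd2_T)
  show "zsmul p (int p ^ kk) (cobd2 P (Tmod p d act) w g h l) \<in> Zpd p d" using g h l gP hP lP by (simp add: cobd2_T)
  fix i n
  have as: "g \<otimes>\<^bsub>P\<^esub> h \<otimes>\<^bsub>P\<^esub> l = g \<otimes>\<^bsub>P\<^esub> (h \<otimes>\<^bsub>P\<^esub> l)" using P_assoc gP hP lP by blast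
  have coc: "(act (rho g h) l i n + rho (g \<otimes>\<^bsub>P\<^esub> h) l i n) mod int p ^ n = (rho h l i n + rho g (h \<otimes>\<^bsub>P\<^esub> l) i n) mod int p ^ n"
    using fun_cong[OF fun_cong[OF rho_coc[OF gP hP lP], of i], of n] by (simp add: zapp)
  show "cobd2 P (Tmod p d act) eh g h l i n mod int p ^ n = zsmul p (int p ^ kk) (cobd2 P (Tmod p d act) w g h l) i n mod int p ^ n"
    unfolding cobd2_T act_eh[OF g h lP] eh_expr[OF h l] eh_expr[OF L_mult[OF g h] l] eh_expr[OF g L_mult[OF h l]]
    unfolding act_dc[OF g h lP]
    unfolding dc_def as zapp
    by (simp only: modn, rule modc1[OF coc, of _ _ 1], simp add: algebra_simps)
qed

lemma conn_eq:
  assumes g: "g \<in> L" and h: "h \<in> L" and l: "l \<in> L"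
  shows "conn P p d m act x etax g h l = cobd2 P (Tmod p d act) w g h l"
proof -
  have e: "(\<lambda>a b. liftM p (etax a b)) = eh" by (simp add: eh_def fun_eq_iff)
  have "zdivp p d kk (cobd2 P (Tmod p d act) eh g h l) = cobd2 P (Tmod p d act) w g h l"
  proof (rule zdivp_eq[OF p_pos])
    show "cobd2 P (Tmod p d act) w g h l \<in> Zpd p d" using g h l LP by (simp add: cobd2_T)
    show "zsmul p (int p ^ kk) (cobd2 P (Tmod p d act) w g h l) = cobd2 P (Tmod p d act) eh g h l"
      using cobd2_eh[OF g h l] by simp
  qed
  then show ?thesis using g h l LP unfolding conn_def e by simp
qed

lemma etax1: "etax \<one>\<^bsub>P\<^esub> g = mzero (MM kk)" "etax g \<one>\<^bsub>P\<^esub> = mzero (MM kk)"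
  using Z2_D(2,3)[OF etax_Z2] by auto

lemma ch1: "ch \<one>\<^bsub>P\<^esub> = (\<lambda>i n. 0)"
  by (simp add: ch_def cf1 liftM_def mzero_app fun_eq_iff)

lemma chZ'[simp]: "l \<in> L \<Longrightarrow> ch l i n mod int p ^ n = ch l i n"
  using Zpd_mod[OF chZ] by blast

lemma DD1: "h \<in> L \<Longrightarrow> DD \<one>\<^bsub>P\<^esub> h = (\<lambda>i n. 0)" "h \<in> L \<Longrightarrow> DD h \<one>\<^bsub>P\<^esub> = (\<lambda>i n. 0)"
proof -
  assume h: "h \<in> L"
  have hP: "h \<in> carrier P" using LP[OF h] .
  show "DD \<one>\<^bsub>P\<^esub> h = (\<lambda>i n. 0)"
    unfolding DD_def dc_def eh_def using hP
    by (simp add: rho1 etax1 ch1 act_zero fun_eq_iff zapp liftM_def mzero_app modn)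
  show "DD h \<one>\<^bsub>P\<^esub> = (\<lambda>i n. 0)"
    unfolding DD_def dc_def eh_def using hP h
    by (simp add: rho1 etax1 ch1 fun_eq_iff zapp liftM_def mzero_app modn)
qed

lemma w1: "w \<one>\<^bsub>P\<^esub> h = (\<lambda>i n. 0)" "w h \<one>\<^bsub>P\<^esub> = (\<lambda>i n. 0)"
proof -
  have z: "zsmul p (int p ^ kk) (\<lambda>i n. 0) = (\<lambda>i n. 0)" by (simp add: zsmul_def)
  show "w \<one>\<^bsub>P\<^esub> h = (\<lambda>i n. 0)"
  proof (cases "h \<in> L")
    case True
    then show ?thesis using w_eq[of "\<one>\<^bsub>P\<^esub>" h] DD1(1)[OF True] z
      by (intro zsmul_inj[OF p_pos wZ zeroZ, of kk]) simp_all
  qed (simp add: w_def)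
  show "w h \<one>\<^bsub>P\<^esub> = (\<lambda>i n. 0)"
  proof (cases "h \<in> L")
    case True
    then show ?thesis using w_eq[of h "\<one>\<^bsub>P\<^esub>"] DD1(2)[OF True] z
      by (intro zsmul_inj[OF p_pos wZ zeroZ, of kk]) simp_all
  qed (simp add: w_def)
qed

lemma eta_B3: "res3 L (Tmod p d act) eta \<in> B3 P L (Tmod p d act)"
proof -
  obtain b where b: "b \<in> cochain2 P (carrier P) (Tmod p d act)"
    and bq: "\<And>g h l. g \<in> carrier P \<Longrightarrow> h \<in> carrier P \<Longrightarrow> l \<in> carrier P \<Longrightarrow>
      msub (Tmod p d act) (conn P p d m act x etax g h l) (eta g h l) = cobd2 P (Tmod p d act) b g h l"
    using etax_eta unfolding B3_def by blast
  have bZ: "g \<in> carrier P \<Longrightarrow> h \<in> carrier P \<Longrightarrow> b g h \<in> Zpd p d" for g h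
    using b unfolding cochain2_def by auto
  have b1: "b \<one>\<^bsub>P\<^esub> h = (\<lambda>i n. 0)" "b h \<one>\<^bsub>P\<^esub> = (\<lambda>i n. 0)" for h
    using b unfolding cochain2_def by auto
  have etaC: "eta \<in> cochain3 P (carrier P) (Tmod p d act)" using eta unfolding Z3_def by blast
  have etaZ: "g \<in> carrier P \<Longrightarrow> h \<in> carrier P \<Longrightarrow> l \<in> carrier P \<Longrightarrow> eta g h l \<in> Zpd p d" for g h l
    using etaC unfolding cochain3_def by auto
  define c2 where "c2 g h = (if g \<in> L \<and> h \<in> L then zadd p (w g h) (zneg p (b g h)) else (\<lambda>i n. 0))" for g h
  have c2C: "c2 \<in> cochain2 P L (Tmod p d act)"
    unfolding cochain2_def
  proof (intro CollectI conjI allI ballI impI)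
    fix g h assume "g \<in> L" "h \<in> L"
    then show "c2 g h \<in> mcar (Tmod p d act)" using LP bZ by (simp add: c2_def)
  next
    fix g h :: 'a assume "g \<notin> L \<or> h \<notin> L"
    then show "c2 g h = mzero (Tmod p d act)" by (auto simp: c2_def)
  next
    fix g
    show "c2 \<one>\<^bsub>P\<^esub> g = mzero (Tmod p d act)" "c2 g \<one>\<^bsub>P\<^esub> = mzero (Tmod p d act)"
      by (simp_all add: c2_def w1 b1 zadd_def zneg_def)
  qed
  have r3C: "res3 L (Tmod p d act) eta \<in> cochain3 P L (Tmod p d act)"
    using etaC LP unfolding cochain3_def res3_def by auto
  have "res3 L (Tmod p d act) eta g h l = cobd2 P (Tmod p d act) c2 g h l" if g: "g \<in> L" and h: "h \<in> L" and l: "l \<in> L" for g h l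
  proof (rule Zpd_eqI)
    note gP = LP[OF g] and hP = LP[OF h] and lP = LP[OF l]
    show "res3 L (Tmod p d act) eta g h l \<in> Zpd p d" using g h l gP hP lP etaZ by (simp add: res3_def)
    show "cobd2 P (Tmod p d act) c2 g h l \<in> Zpd p d" using g h l gP hP lP bZ by (simp add: cobd2_T c2_def)
    fix i n
    have cbZ: "cobd2 P (Tmod p d act) b g h l \<in> Zpd p d" using gP hP lP bZ by (simp add: cobd2_T)
    have hb: "(cobd2 P (Tmod p d act) w g h l i n + - eta g h l i n) mod int p ^ n = cobd2 P (Tmod p d act) b g h l i n mod int p ^ n"
      using fun_cong[OF fun_cong[OF bq[OF gP hP lP], of i], of n] Zpd_mod[OF cbZ, of i n] unfolding msub_T conn_eq[OF g h l] zapp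
      by (simp add: modn)
    have e1: "act (c2 g h) l = zadd p (act (w g h) l) (zneg p (act (b g h) l))"
      using g h gP hP lP bZ by (simp add: c2_def act_zadd act_zneg)
    have e2: "c2 h l = zadd p (w h l) (zneg p (b h l))" "c2 (g \<otimes>\<^bsub>P\<^esub> h) l = zadd p (w (g \<otimes>\<^bsub>P\<^esub> h) l) (zneg p (b (g \<otimes>\<^bsub>P\<^esub> h) l))"
      "c2 g (h \<otimes>\<^bsub>P\<^esub> l) = zadd p (w g (h \<otimes>\<^bsub>P\<^esub> l)) (zneg p (b g (h \<otimes>\<^bsub>P\<^esub> l)))"
      using g h l by (simp_all add: c2_def)
    have e3: "res3 L (Tmod p d act) eta g h l = eta g h l" using g h l by (simp add: res3_def)
    show "res3 L (Tmod p d act) eta g h l i n mod int p ^ n = cobd2 P (Tmod p d act) c2 g h l i n mod int p ^ n"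
      using hb unfolding e3 cobd2_T e1 e2 zapp
      apply (simp only: modn)
      apply (erule modc1[of _ _ _ _ _ "-1"])
      apply (simp add: algebra_simps)
      done
  qed
  then show ?thesis unfolding B3_def using r3C c2C by blast
qed

definition "tt g h = (SOME t. t \<in> Zpd p d \<and> etax g h = trunc kk (zsmul p (int p ^ (kk - m)) t))"

lemma tt_prop: "tt g h \<in> Zpd p d \<and> etax g h = trunc kk (zsmul p (int p ^ (kk - m)) (tt g h))"
proof -
  have "etax g h \<in> trunc kk ` {zsmul p (int p ^ (kk - m)) t | t. t \<in> Zpd p d}"
    using etaxJ unfolding Jc_def by blast
  then have "\<exists>t. t \<in> Zpd p d \<and> etax g h = trunc kk (zsmul p (int p ^ (kk - m)) t)" by blast
  then show ?thesis unfolding tt_def by (rule someI_ex)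
qed

lemma ttZ[simp]: "tt g h \<in> Zpd p d" using tt_prop by blast

definition "ss g h = (SOME s. s \<in> Zpd p d \<and> eh g h = zadd p (zsmul p (int p ^ (kk - m)) (tt g h)) (zsmul p (int p ^ kk) s))"

lemma ss_prop:
  assumes g: "g \<in> carrier P" and h: "h \<in> carrier P"
  shows "ss g h \<in> Zpd p d \<and> eh g h = zadd p (zsmul p (int p ^ (kk - m)) (tt g h)) (zsmul p (int p ^ kk) (ss g h))"
proof -
  let ?y = "zsmul p (int p ^ (kk - m)) (tt g h)"
  define v where "v = zadd p (eh g h) (zneg p ?y)"
  have yZ: "?y \<in> Zpd p d" by simp
  have vZ: "v \<in> Zpd p d" unfolding v_def using g h by simp
  have "eh g h i kk = ?y i kk" for i
  proof -
    have "eh g h i kk = etax g h i mod int p ^ kk" by (simp add: eh_def liftM_def)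
    also have "\<dots> = ?y i kk mod int p ^ kk" using tt_prop[of g h] by (simp add: trunc_def)
    also have "\<dots> = ?y i kk" using Zpd_mod[OF yZ] by blast
    finally show ?thesis .
  qed
  then have "v i kk = 0" for i unfolding v_def zapp by (simp add: modn)
  then obtain s where s: "s \<in> Zpd p d" "v = zsmul p (int p ^ kk) s"
    using Zpd_divisible[OF p_pos vZ] by blast
  have "eh g h = zadd p ?y (zsmul p (int p ^ kk) s)"
  proof (rule Zpd_eqI)
    show "eh g h \<in> Zpd p d" using g h by simp
    show "zadd p ?y (zsmul p (int p ^ kk) s) \<in> Zpd p d" using s by simp
    fix i n
    show "eh g h i n mod int p ^ n = zadd p ?y (zsmul p (int p ^ kk) s) i n mod int p ^ n"
      unfolding s(2)[symmetric] v_def zapp by (simp add: modn)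
  qed
  then have "\<exists>s. s \<in> Zpd p d \<and> eh g h = zadd p ?y (zsmul p (int p ^ kk) s)" using s by blast
  then show ?thesis unfolding ss_def by (rule someI_ex)
qed

definition "u g h = (if g \<in> L \<and> h \<in> L then zadd p (zsmul p (int p ^ m) (w g h))
   (zneg p (zadd p (tt g h) (zsmul p (int p ^ m) (ss g h)))) else (\<lambda>i n. 0))"

lemma uZ[simp]: "u g h \<in> Zpd p d"
  using ss_prop[of g h] LP by (auto simp: u_def)

lemma pk_split: "int p ^ kk = int p ^ (kk - m) * int p ^ m"
proof -
  have "int p ^ (kk - m) * int p ^ m = int p ^ (kk - m + m)" by (simp only: power_add)
  moreover have "kk - m + m = kk" by simp
  ultimately show ?thesis by metis
qed

lemma claimA:
  assumes g: "g \<in> L" and h: "h \<in> L"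
  shows "zsmul p (int p ^ (kk - m)) (u g h) = zadd p (rho g h) (dc g h)"
proof (rule Zpd_eqI)
  note gP = LP[OF g] and hP = LP[OF h]
  show "zsmul p (int p ^ (kk - m)) (u g h) \<in> Zpd p d" by simp
  show "zadd p (rho g h) (dc g h) \<in> Zpd p d" using g h gP hP by simp
  fix i n
  have h1: "(rho g h i n + eh g h i n + dc g h i n) mod int p ^ n = (int p ^ (kk - m) * int p ^ m * w g h i n) mod int p ^ n"
    using fun_cong[OF fun_cong[OF w_eq[OF g h], of i], of n] unfolding DD_def zapp pk_split by (simp add: modn)
  have h2: "eh g h i n mod int p ^ n = (int p ^ (kk - m) * tt g h i n + int p ^ (kk - m) * int p ^ m * ss g h i n) mod int p ^ n"
    using fun_cong[OF fun_cong[OF conjunct2[OF ss_prop[OF gP hP]], of i], of n] unfolding zapp pk_split by (simp add: modn)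
  show "zsmul p (int p ^ (kk - m)) (u g h) i n mod int p ^ n = zadd p (rho g h) (dc g h) i n mod int p ^ n"
    unfolding u_def using g h unfolding zapp
    apply (simp only: modn if_True conj_absorb simp_thms)
    apply (rule modc2[OF h1 h2, of _ _ "-1" 1])
    apply (simp add: algebra_simps)
    done
qed

lemma claimA_app:
  assumes g: "g \<in> L" and h: "h \<in> L"
  shows "(int p ^ (kk - m) * u g h i n) mod int p ^ n =
    (rho g h i n + ch h i n + - ch (g \<otimes>\<^bsub>P\<^esub> h) i n + act (ch g) h i n) mod int p ^ n"
  using fun_cong[OF fun_cong[OF claimA[OF g h], of i], of n] unfolding dc_def zapp
  by (simp add: modn ac_simps)

lemma claimA_act:
  assumes g: "g \<in> L" and h: "h \<in> L" and l: "l \<in> carrier P"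
  shows "(int p ^ (kk - m) * act (u g h) l i n) mod int p ^ n =
    (act (rho g h) l i n + act (ch h) l i n + - act (ch (g \<otimes>\<^bsub>P\<^esub> h)) l i n + act (ch g) (h \<otimes>\<^bsub>P\<^esub> l) i n) mod int p ^ n"
proof -
  have "act (zsmul p (int p ^ (kk - m)) (u g h)) l = act (zadd p (rho g h) (dc g h)) l"
    using claimA[OF g h] by simp
  then have "zsmul p (int p ^ (kk - m)) (act (u g h) l) = zadd p (act (rho g h) l) (act (dc g h) l)"
    using g h l LP by (simp add: act_zsmul act_zadd)
  from fun_cong[OF fun_cong[OF this, of i], of n] show ?thesis
    unfolding act_dc[OF g h l] zapp by (simp add: modn ac_simps)
qed

lemma claimB:
  assumes g: "g \<in> L" and h: "h \<in> L" and l: "l \<in> L"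
  shows "cobd2 P (Tmod p d act) u g h l = (\<lambda>i n. 0)"
proof (rule zsmul_inj[OF p_pos, of _ d _ "kk - m"])
  note gP = LP[OF g] and hP = LP[OF h] and lP = LP[OF l]
  show "cobd2 P (Tmod p d act) u g h l \<in> Zpd p d" using gP hP lP by (simp add: cobd2_T)
  show "(\<lambda>i n. 0) \<in> Zpd p d" by simp
  have z: "zsmul p (int p ^ (kk - m)) (\<lambda>i n. 0) = (\<lambda>i n. 0)" by (simp add: zsmul_def)
  show "zsmul p (int p ^ (kk - m)) (cobd2 P (Tmod p d act) u g h l) = zsmul p (int p ^ (kk - m)) (\<lambda>i n. 0)"
    unfolding z
  proof (rule Zpd_eqI)
    show "zsmul p (int p ^ (kk - m)) (cobd2 P (Tmod p d act) u g h l) \<in> Zpd p d" using gP hP lP by (simp add: cobd2_T)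
    show "(\<lambda>i n. 0) \<in> Zpd p d" by simp
    fix i n
    have as: "g \<otimes>\<^bsub>P\<^esub> h \<otimes>\<^bsub>P\<^esub> l = g \<otimes>\<^bsub>P\<^esub> (h \<otimes>\<^bsub>P\<^esub> l)" using P_assoc gP hP lP by blast
    have coc: "(act (rho g h) l i n + rho (g \<otimes>\<^bsub>P\<^esub> h) l i n) mod int p ^ n = (rho h l i n + rho g (h \<otimes>\<^bsub>P\<^esub> l) i n) mod int p ^ n"
      using fun_cong[OF fun_cong[OF rho_coc[OF gP hP lP], of i], of n] by (simp add: zapp)
    note hA1 = claimA_app[OF h l, of i n]
    note hA2 = claimA_app[OF L_mult[OF g h] l, of i n, unfolded as]
    note hA3 = claimA_app[OF g L_mult[OF h l], of i n]
    note hA4 = claimA_act[OF g h lP, of i n]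
    show "zsmul p (int p ^ (kk - m)) (cobd2 P (Tmod p d act) u g h l) i n mod int p ^ n = (\<lambda>i n. 0) i n mod int p ^ n"
      unfolding cobd2_T zapp
      apply (simp only: modn)
      apply (rule modc5[OF hA1 hA2 hA3 hA4 coc, of _ _ 1 "-1" 1 "-1" "-1"])
      apply (simp add: algebra_simps)
      done
  qed
qed

definition "tsum A f = (\<lambda>i n. (\<Sum>g\<in>A. f g i n) mod int p ^ n)"

lemma tsumZ[simp]: "(\<And>g. g \<in> A \<Longrightarrow> f g \<in> Zpd p d) \<Longrightarrow> tsum A f \<in> Zpd p d"
  unfolding tsum_def
proof (rule Zpd_modI[OF p_pos])
  fix i n assume fZ: "\<And>g. g \<in> A \<Longrightarrow> f g \<in> Zpd p d"
  have e: "(\<Sum>g\<in>A. f g i (Suc n) mod int p ^ n) = (\<Sum>g\<in>A. f g i n mod int p ^ n)"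
    by (rule sum.cong) (auto simp: Zpd_coh'[OF fZ])
  have "(\<Sum>g\<in>A. f g i (Suc n)) mod int p ^ n = (\<Sum>g\<in>A. f g i (Suc n) mod int p ^ n) mod int p ^ n"
    by (simp add: mod_sum_eq)
  also have "\<dots> = (\<Sum>g\<in>A. f g i n mod int p ^ n) mod int p ^ n" unfolding e ..
  also have "\<dots> = (\<Sum>g\<in>A. f g i n) mod int p ^ n" by (simp add: mod_sum_eq)
  finally show "(\<Sum>g\<in>A. f g i (Suc n)) mod int p ^ n = (\<Sum>g\<in>A. f g i n) mod int p ^ n" .
next
  fix i n assume fZ: "\<And>g. g \<in> A \<Longrightarrow> f g \<in> Zpd p d" and "d \<le> i"
  then show "(\<Sum>g\<in>A. f g i n) mod int p ^ n = 0" using Zpd_high[OF fZ] by simp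
qed

lemma act_tsum:
  assumes A: "finite A" and fZ: "\<And>g. g \<in> A \<Longrightarrow> f g \<in> Zpd p d" and l: "l \<in> carrier P"
  shows "act (tsum A f) l = tsum A (\<lambda>g. act (f g) l)"
  using A fZ
proof (induction A rule: finite_induct)
  case empty
  then show ?case using act_zero[OF l] by (simp add: tsum_def)
next
  case (insert a A)
  have e: "tsum (insert a A) f = zadd p (f a) (tsum A f)" for f
    using insert(1,2) by (simp add: tsum_def zadd_def fun_eq_iff modn)
  have IH: "act (tsum A f) l = tsum A (\<lambda>g. act (f g) l)" using insert by blast
  show ?case unfolding e using insert(4) l IH by (simp add: act_zadd)
qed

lemma L_fin: "finite L" using finite_subset[OF subgroup.subset[OF Lsub] P_fin] .

definition "cU y = tsum L (\<lambda>g. u g y)"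

lemma cUZ[simp]: "cU y \<in> Zpd p d" unfolding cU_def by simp

lemma act_cU: "l \<in> carrier P \<Longrightarrow> act (cU y) l = tsum L (\<lambda>g. act (u g y) l)"
  unfolding cU_def by (rule act_tsum[OF L_fin]) auto

lemma claimB_app:
  assumes g: "g \<in> L" and h: "h \<in> L" and l: "l \<in> L"
  shows "(u h l i n + - u (g \<otimes>\<^bsub>P\<^esub> h) l i n + u g (h \<otimes>\<^bsub>P\<^esub> l) i n + - act (u g h) l i n) mod int p ^ n = 0"
  using fun_cong[OF fun_cong[OF claimB[OF g h l], of i], of n] unfolding cobd2_T zapp
  by (simp add: modn)

lemma claimC_app:
  assumes h: "h \<in> L" and l: "l \<in> L"
  shows "(int (card L) * u h l i n) mod int p ^ n =
    ((\<Sum>g\<in>L. u g l i n) - (\<Sum>g\<in>L. u g (h \<otimes>\<^bsub>P\<^esub> l) i n) + (\<Sum>g\<in>L. act (u g h) l i n)) mod int p ^ n"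
proof -
  have s0: "(\<Sum>g\<in>L. u h l i n + - u (g \<otimes>\<^bsub>P\<^esub> h) l i n + u g (h \<otimes>\<^bsub>P\<^esub> l) i n + - act (u g h) l i n) mod int p ^ n = 0"
  proof -
    have "(\<Sum>g\<in>L. u h l i n + - u (g \<otimes>\<^bsub>P\<^esub> h) l i n + u g (h \<otimes>\<^bsub>P\<^esub> l) i n + - act (u g h) l i n) mod int p ^ n
      = (\<Sum>g\<in>L. (u h l i n + - u (g \<otimes>\<^bsub>P\<^esub> h) l i n + u g (h \<otimes>\<^bsub>P\<^esub> l) i n + - act (u g h) l i n) mod int p ^ n) mod int p ^ n"
      by (simp only: mod_sum_eq)
    also have "\<dots> = 0" using claimB_app[OF _ h l] by simp
    finally show ?thesis .
  qed
  have hP: "h \<in> carrier P" using LP[OF h] .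
  have bij: "bij_betw (\<lambda>g. g \<otimes>\<^bsub>P\<^esub> h) L L"
  proof (rule bij_betwI[where g = "\<lambda>g. g \<otimes>\<^bsub>P\<^esub> inv\<^bsub>P\<^esub> h"])
    have ih: "inv\<^bsub>P\<^esub> h \<in> L" using subgroup.m_inv_closed[OF Lsub h] .
    show "(\<lambda>g. g \<otimes>\<^bsub>P\<^esub> h) \<in> L \<rightarrow> L" using h by auto
    show "(\<lambda>g. g \<otimes>\<^bsub>P\<^esub> inv\<^bsub>P\<^esub> h) \<in> L \<rightarrow> L" using ih by auto
    show "g \<otimes>\<^bsub>P\<^esub> h \<otimes>\<^bsub>P\<^esub> inv\<^bsub>P\<^esub> h = g" if "g \<in> L" for g
      using LP[OF that] hP by (simp add: P_assoc group.r_inv[OF P_group])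
    show "g \<otimes>\<^bsub>P\<^esub> inv\<^bsub>P\<^esub> h \<otimes>\<^bsub>P\<^esub> h = g" if "g \<in> L" for g
      using LP[OF that] hP by (simp add: P_assoc)
  qed
  have re: "(\<Sum>g\<in>L. u (g \<otimes>\<^bsub>P\<^esub> h) l i n) = (\<Sum>g\<in>L. u g l i n)"
    using sum.reindex_bij_betw[OF bij, of "\<lambda>g. u g l i n"] .
  have "(\<Sum>g\<in>L. u h l i n + - u (g \<otimes>\<^bsub>P\<^esub> h) l i n + u g (h \<otimes>\<^bsub>P\<^esub> l) i n + - act (u g h) l i n)
      = int (card L) * u h l i n - (\<Sum>g\<in>L. u g l i n) + (\<Sum>g\<in>L. u g (h \<otimes>\<^bsub>P\<^esub> l) i n) - (\<Sum>g\<in>L. act (u g h) l i n)"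
    by (simp add: sum.distrib sum_subtractf re)
  then have "(int (card L) * u h l i n - (\<Sum>g\<in>L. u g l i n) + (\<Sum>g\<in>L. u g (h \<otimes>\<^bsub>P\<^esub> l) i n) - (\<Sum>g\<in>L. act (u g h) l i n)) mod int p ^ n = 0 mod int p ^ n"
    using s0 by simp
  then show ?thesis by (rule modc1[of _ _ _ _ _ 1]) (simp add: algebra_simps)
qed

lemma u1: "u g \<one>\<^bsub>P\<^esub> = (\<lambda>i n. 0)"
proof (cases "g \<in> L")
  case True
  have gP: "g \<in> carrier P" using LP[OF True] .
  have z: "zsmul p (int p ^ (kk - m)) (\<lambda>i n. 0) = (\<lambda>i n. 0)" by (simp add: zsmul_def)
  have "zadd p (rho g \<one>\<^bsub>P\<^esub>) (dc g \<one>\<^bsub>P\<^esub>) = (\<lambda>i n. 0)"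
    unfolding dc_def using gP True by (simp add: rho1 ch1 fun_eq_iff zapp modn)
  then have "zsmul p (int p ^ (kk - m)) (u g \<one>\<^bsub>P\<^esub>) = zsmul p (int p ^ (kk - m)) (\<lambda>i n. 0)"
    using claimA[OF True L_one] z by simp
  then show ?thesis by (rule zsmul_inj[OF p_pos uZ zeroZ])
qed (simp add: u_def)

lemma cU1: "cU \<one>\<^bsub>P\<^esub> = (\<lambda>i n. 0)"
  by (simp add: cU_def tsum_def u1)

lemma rho_B2: "res2 L (Tmod p d act) rho \<in> B2 P L (Tmod p d act)"
proof -
  have lag: "card (rcosets\<^bsub>P\<^esub> L) * card L = p ^ m"
    using group.lagrange[OF P_group Lsub] Pord by (simp add: order_def)
  define r where "r = card (rcosets\<^bsub>P\<^esub> L)"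
  define NN where "NN = int p ^ (kk - 2 * m) * int r"
  have R1: "int p ^ (kk - m) = NN * int (card L)"
  proof -
    have "kk - m = (kk - 2 * m) + m" by simp
    then have "int p ^ (kk - m) = int p ^ (kk - 2 * m) * int p ^ m" by (metis power_add)
    also have "int p ^ m = int r * int (card L)" using lag unfolding r_def by (metis of_nat_mult of_nat_power)
    finally show ?thesis unfolding NN_def by (simp add: ac_simps)
  qed
  define c1 where "c1 y = (if y \<in> L then zadd p (zsmul p NN (cU y)) (zneg p (ch y)) else (\<lambda>i n. 0))" for y
  have c1C: "c1 \<in> cochain1 P L (Tmod p d act)"
    unfolding cochain1_def
  proof (intro CollectI conjI allI ballI impI)
    fix g assume "g \<in> L" then show "c1 g \<in> mcar (Tmod p d act)" by (simp add: c1_def)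
  next
    fix g :: 'a assume "g \<notin> L" then show "c1 g = mzero (Tmod p d act)" by (simp add: c1_def)
  next
    show "c1 \<one>\<^bsub>P\<^esub> = mzero (Tmod p d act)" by (simp add: c1_def cU1 ch1 zadd_def zneg_def zsmul_def)
  qed
  have r2C: "res2 L (Tmod p d act) rho \<in> cochain2 P L (Tmod p d act)"
    unfolding cochain2_def res2_def using LP by (auto simp: rho1)
  have "res2 L (Tmod p d act) rho g h = cobd1 P (Tmod p d act) c1 g h" if g: "g \<in> L" and h: "h \<in> L" for g h
  proof (rule Zpd_eqI)
    note gP = LP[OF g] and hP = LP[OF h]
    show "res2 L (Tmod p d act) rho g h \<in> Zpd p d" using g h gP hP by (simp add: res2_def)
    show "cobd1 P (Tmod p d act) c1 g h \<in> Zpd p d" using g h gP hP by (simp add: cobd1_T c1_def)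
    fix i n
    note hA = claimA_app[OF g h, of i n, unfolded R1]
    note hC = claimC_app[OF g h, of i n]
    have e1: "c1 h = zadd p (zsmul p NN (cU h)) (zneg p (ch h))"
      "c1 (g \<otimes>\<^bsub>P\<^esub> h) = zadd p (zsmul p NN (cU (g \<otimes>\<^bsub>P\<^esub> h))) (zneg p (ch (g \<otimes>\<^bsub>P\<^esub> h)))"
      "act (c1 g) h = zadd p (zsmul p NN (tsum L (\<lambda>x. act (u x g) h))) (zneg p (act (ch g) h))"
      using g h gP hP by (simp_all add: c1_def act_zadd act_zneg act_zsmul act_cU)
    have e2: "res2 L (Tmod p d act) rho g h = rho g h" using g h by (simp add: res2_def)
    show "res2 L (Tmod p d act) rho g h i n mod int p ^ n = cobd1 P (Tmod p d act) c1 g h i n mod int p ^ n"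
      unfolding e2 cobd1_T e1 cU_def tsum_def zapp
      apply (simp only: modn)
      apply (rule modc2[OF hA hC, of _ _ "-1" NN])
      apply (simp add: algebra_simps)
      done
  qed
  then show ?thesis unfolding B2_def using r2C c1C by blast
qed

end

context tset
begin

lemma trunc_zero: "trunc k (\<lambda>i n. 0) = mzero (MM k)"
  by (simp add: trunc_def mzero_app fun_eq_iff)

lemma tau_Z2:
  assumes rho: "rho \<in> Z2 P (carrier P) (Tmod p d act)" and e: "e \<in> Z2 P (carrier P) (MM k)"
  shows "(\<lambda>g h. madd (MM k) (trunc k (rho g h)) (e g h)) \<in> Z2 P (carrier P) (MM k)"
proof -
  have rZ: "g \<in> carrier P \<Longrightarrow> h \<in> carrier P \<Longrightarrow> rho g h \<in> Zpd p d" for g h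
    using rho unfolding Z2_def cochain2_def by auto
  have r0: "g \<notin> carrier P \<or> h \<notin> carrier P \<Longrightarrow> rho g h = (\<lambda>i n. 0)" for g h
    using rho unfolding Z2_def cochain2_def by auto
  have r1: "rho \<one>\<^bsub>P\<^esub> g = (\<lambda>i n. 0)" "rho g \<one>\<^bsub>P\<^esub> = (\<lambda>i n. 0)" for g
    using rho unfolding Z2_def cochain2_def by auto
  have rc: "g \<in> carrier P \<Longrightarrow> h \<in> carrier P \<Longrightarrow> l \<in> carrier P \<Longrightarrow>
   zadd p (act (rho g h) l) (rho (g \<otimes>\<^bsub>P\<^esub> h) l) = zadd p (rho h l) (rho g (h \<otimes>\<^bsub>P\<^esub> l))" for g h l
    using rho unfolding Z2_def by auto
  have eC: "e \<in> cochain2 P (carrier P) (MM k)" using e unfolding Z2_def by blast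
  have eZ: "g \<in> carrier P \<Longrightarrow> h \<in> carrier P \<Longrightarrow> e g h \<in> mcar (MM k)" for g h
    using eC unfolding cochain2_def by auto
  have e0: "g \<notin> carrier P \<or> h \<notin> carrier P \<Longrightarrow> e g h = mzero (MM k)" for g h
    using eC unfolding cochain2_def by auto
  have e1: "e \<one>\<^bsub>P\<^esub> g = mzero (MM k)" "e g \<one>\<^bsub>P\<^esub> = mzero (MM k)" for g
    using eC unfolding cochain2_def by auto
  have ec: "g \<in> carrier P \<Longrightarrow> h \<in> carrier P \<Longrightarrow> l \<in> carrier P \<Longrightarrow>
      madd (MM k) (mact (MM k) (e g h) l) (e (g \<otimes>\<^bsub>P\<^esub> h) l) = madd (MM k) (e h l) (e g (h \<otimes>\<^bsub>P\<^esub> l))" for g h l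
    using e unfolding Z2_def by auto
  have zz: "madd (MM k) (mzero (MM k)) (mzero (MM k)) = mzero (MM k)" by (simp add: fun_eq_iff madd_app mzero_app)
  show ?thesis unfolding Z2_def cochain2_def
  proof (intro CollectI conjI ballI allI impI)
    fix g h assume "g \<in> carrier P" "h \<in> carrier P"
    then show "madd (MM k) (trunc k (rho g h)) (e g h) \<in> mcar (MM k)" using rZ eZ by simp
  next
    fix g h assume "g \<notin> carrier P \<or> h \<notin> carrier P"
    then show "madd (MM k) (trunc k (rho g h)) (e g h) = mzero (MM k)" using r0 e0 zz trunc_zero by simp
  next
    fix g
    show "madd (MM k) (trunc k (rho \<one>\<^bsub>P\<^esub> g)) (e \<one>\<^bsub>P\<^esub> g) = mzero (MM k)"
      "madd (MM k) (trunc k (rho g \<one>\<^bsub>P\<^esub>)) (e g \<one>\<^bsub>P\<^esub>) = mzero (MM k)"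
      using r1 e1 zz trunc_zero by simp_all
  next
    fix g h l assume g: "g \<in> carrier P" and h: "h \<in> carrier P" and l: "l \<in> carrier P"
    have ma: "mact (MM k) (madd (MM k) (trunc k (rho g h)) (e g h)) l = madd (MM k) (trunc k (act (rho g h) l)) (mact (MM k) (e g h) l)"
      using g h l rZ eZ by (simp add: mact_madd mact_trunc)
    show "madd (MM k) (mact (MM k) (madd (MM k) (trunc k (rho g h)) (e g h)) l) (madd (MM k) (trunc k (rho (g \<otimes>\<^bsub>P\<^esub> h) l)) (e (g \<otimes>\<^bsub>P\<^esub> h) l)) =
          madd (MM k) (madd (MM k) (trunc k (rho h l)) (e h l)) (madd (MM k) (trunc k (rho g (h \<otimes>\<^bsub>P\<^esub> l))) (e g (h \<otimes>\<^bsub>P\<^esub> l)))"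
      unfolding ma
    proof (rule M_eqI)
      show "madd (MM k) (madd (MM k) (trunc k (act (rho g h) l)) (mact (MM k) (e g h) l)) (madd (MM k) (trunc k (rho (g \<otimes>\<^bsub>P\<^esub> h) l)) (e (g \<otimes>\<^bsub>P\<^esub> h) l)) \<in> mcar (MM k)"
        using g h l rZ eZ by simp
      show "madd (MM k) (madd (MM k) (trunc k (rho h l)) (e h l)) (madd (MM k) (trunc k (rho g (h \<otimes>\<^bsub>P\<^esub> l))) (e g (h \<otimes>\<^bsub>P\<^esub> l))) \<in> mcar (MM k)"
        using g h l rZ eZ by simp
      fix i
      have h1: "(act (rho g h) l i k + rho (g \<otimes>\<^bsub>P\<^esub> h) l i k) mod int p ^ k = (rho h l i k + rho g (h \<otimes>\<^bsub>P\<^esub> l) i k) mod int p ^ k"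
        using fun_cong[OF fun_cong[OF rc[OF g h l], of i], of k] by (simp add: zapp)
      have h2: "(mact (MM k) (e g h) l i + e (g \<otimes>\<^bsub>P\<^esub> h) l i) mod int p ^ k = (e h l i + e g (h \<otimes>\<^bsub>P\<^esub> l) i) mod int p ^ k"
        using fun_cong[OF ec[OF g h l], of i] by (simp add: madd_app)
      show "madd (MM k) (madd (MM k) (trunc k (act (rho g h) l)) (mact (MM k) (e g h) l)) (madd (MM k) (trunc k (rho (g \<otimes>\<^bsub>P\<^esub> h) l)) (e (g \<otimes>\<^bsub>P\<^esub> h) l)) i mod int p ^ k =
          madd (MM k) (madd (MM k) (trunc k (rho h l)) (e h l)) (madd (MM k) (trunc k (rho g (h \<otimes>\<^bsub>P\<^esub> l))) (e g (h \<otimes>\<^bsub>P\<^esub> l))) i mod int p ^ k"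
        unfolding madd_app trunc_def
        apply (simp only: modn)
        apply (rule modc2[OF h1 h2, of _ _ 1 1])
        apply (simp add: algebra_simps)
        done
    qed
  qed
qed

end

context gset
begin

interpretation Pg: group P by (rule P_group)
interpretation Gg: group G by (rule G_group)

lemma N_sub: "subgroup ({\<one>\<^bsub>P\<^esub>} \<times> mcar (MM k)) G"
proof (rule Gg.subgroupI)
  show "{\<one>\<^bsub>P\<^esub>} \<times> mcar (MM k) \<subseteq> carrier G" by (auto simp: ext_carrier)
  show "{\<one>\<^bsub>P\<^esub>} \<times> mcar (MM k) \<noteq> {}" using mzeroM by blast
  show "a \<otimes>\<^bsub>G\<^esub> b \<in> {\<one>\<^bsub>P\<^esub>} \<times> mcar (MM k)" if "a \<in> {\<one>\<^bsub>P\<^esub>} \<times> mcar (MM k)" "b \<in> {\<one>\<^bsub>P\<^esub>} \<times> mcar (MM k)" for a b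
    using that tc(1) by (auto simp: ext_mult)
  show "inv\<^bsub>G\<^esub> a \<in> {\<one>\<^bsub>P\<^esub>} \<times> mcar (MM k)" if ha: "a \<in> {\<one>\<^bsub>P\<^esub>} \<times> mcar (MM k)" for a
  proof -
    have aG: "a \<in> carrier G" using ha by (auto simp: ext_carrier)
    have "fst (inv\<^bsub>G\<^esub> a) = \<one>\<^bsub>P\<^esub>" using fst_inv[OF aG] ha by auto
    moreover have "inv\<^bsub>G\<^esub> a \<in> carrier G" using aG by simp
    ultimately show ?thesis by (cases "inv\<^bsub>G\<^esub> a") (auto simp: ext_carrier)
  qed
qed

lemma fst_prod:
  assumes Q1: "\<one>\<^bsub>G\<^esub> \<in> Q" and QN: "Q \<subseteq> {\<one>\<^bsub>P\<^esub>} \<times> mcar (MM k)"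
    and LP': "\<And>l. l \<in> L \<Longrightarrow> l \<in> carrier P"
  shows "fst ` (((\<lambda>l. (l, a l)) ` L) <#>\<^bsub>G\<^esub> Q) = L"
proof
  show "fst ` (((\<lambda>l. (l, a l)) ` L) <#>\<^bsub>G\<^esub> Q) \<subseteq> L"
  proof
    fix y assume "y \<in> fst ` (((\<lambda>l. (l, a l)) ` L) <#>\<^bsub>G\<^esub> Q)"
    then obtain l q where lq: "l \<in> L" "q \<in> Q" "y = fst ((l, a l) \<otimes>\<^bsub>G\<^esub> q)" unfolding set_mult_def by blast
    have "fst q = \<one>\<^bsub>P\<^esub>" using lq(2) QN by auto
    then show "y \<in> L" using lq LP' by (simp add: fst_mult)
  qed
  show "L \<subseteq> fst ` (((\<lambda>l. (l, a l)) ` L) <#>\<^bsub>G\<^esub> Q)"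
  proof
    fix l assume l: "l \<in> L"
    have "fst ((l, a l) \<otimes>\<^bsub>G\<^esub> \<one>\<^bsub>G\<^esub>) = l" using LP'[OF l] by (simp add: fst_mult fst_one)
    moreover have "(l, a l) \<otimes>\<^bsub>G\<^esub> \<one>\<^bsub>G\<^esub> \<in> ((\<lambda>l. (l, a l)) ` L) <#>\<^bsub>G\<^esub> Q"
      unfolding set_mult_def using l Q1 by blast
    ultimately show "l \<in> fst ` (((\<lambda>l. (l, a l)) ` L) <#>\<^bsub>G\<^esub> Q)" by force
  qed
qed

lemma rel_add:
  assumes l: "l \<in> carrier P" and l': "l' \<in> carrier P"
    and tM: "t l \<in> mcar (MM k)" "t l' \<in> mcar (MM k)" and gM: "\<gamma> l \<in> mcar (MM k)" "\<gamma> l' \<in> mcar (MM k)"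
    and tr: "t (l \<otimes>\<^bsub>P\<^esub> l') = madd (MM k) (madd (MM k) (mact (MM k) (t l) l') (t l')) (\<tau> l l')"
    and gr: "\<gamma> (l \<otimes>\<^bsub>P\<^esub> l') = madd (MM k) (mact (MM k) (\<gamma> l) l') (\<gamma> l')"
  shows "madd (MM k) (t (l \<otimes>\<^bsub>P\<^esub> l')) (\<gamma> (l \<otimes>\<^bsub>P\<^esub> l')) =
     madd (MM k) (madd (MM k) (mact (MM k) (madd (MM k) (t l) (\<gamma> l)) l') (madd (MM k) (t l') (\<gamma> l'))) (\<tau> l l')"
proof -
  have e: "mact (MM k) (madd (MM k) (t l) (\<gamma> l)) l' = madd (MM k) (mact (MM k) (t l) l') (mact (MM k) (\<gamma> l) l')"
    using tM gM l' by (simp add: mact_madd)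
  show ?thesis unfolding tr gr e
    by (rule ext) (simp only: madd_app modn, rule arg_cong[where f = "\<lambda>z. z mod int p ^ k"], simp add: algebra_simps)
qed

lemma rel_sub:
  assumes l: "l \<in> carrier P" and l': "l' \<in> carrier P"
    and tM: "t l \<in> mcar (MM k)" "t l' \<in> mcar (MM k)" and cM: "c l \<in> mcar (MM k)" "c l' \<in> mcar (MM k)"
    and tr: "t (l \<otimes>\<^bsub>P\<^esub> l') = madd (MM k) (madd (MM k) (mact (MM k) (t l) l') (t l')) (\<tau> l l')"
    and cr: "c (l \<otimes>\<^bsub>P\<^esub> l') = madd (MM k) (madd (MM k) (mact (MM k) (c l) l') (c l')) (\<tau> l l')"
  shows "madd (MM k) (c (l \<otimes>\<^bsub>P\<^esub> l')) (mneg (MM k) (t (l \<otimes>\<^bsub>P\<^esub> l'))) =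
     madd (MM k) (mact (MM k) (madd (MM k) (c l) (mneg (MM k) (t l))) l') (madd (MM k) (c l') (mneg (MM k) (t l')))"
proof -
  have e: "mact (MM k) (madd (MM k) (c l) (mneg (MM k) (t l))) l' = madd (MM k) (mact (MM k) (c l) l') (mneg (MM k) (mact (MM k) (t l) l'))"
    using tM cM l' by (simp add: mact_madd mact_mneg)
  show ?thesis unfolding tr cr e
    by (rule ext) (simp only: madd_app mneg_app modn, rule arg_cong[where f = "\<lambda>z. z mod int p ^ k"], simp add: algebra_simps)
qed

end

theorem theorem5p3:
  fixes p d m l x :: nat
    and P :: "'g monoid"
    and act :: "(nat \<Rightarrow> nat \<Rightarrow> int) \<Rightarrow> 'g \<Rightarrow> (nat \<Rightarrow> nat \<Rightarrow> int)"
    and rho :: "'g \<Rightarrow> 'g \<Rightarrow> (nat \<Rightarrow> nat \<Rightarrow> int)"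
    and eta :: "'g \<Rightarrow> 'g \<Rightarrow> 'g \<Rightarrow> (nat \<Rightarrow> nat \<Rightarrow> int)"
    and K :: "nat \<Rightarrow> ('g \<Rightarrow> 'g \<Rightarrow> (nat \<Rightarrow> int)) set"
    and etax :: "'g \<Rightarrow> 'g \<Rightarrow> (nat \<Rightarrow> int)"
    and tL :: "'g set \<Rightarrow> 'g \<Rightarrow> (nat \<Rightarrow> int)"
  assumes p_prime: "Factorial_Ring.prime p"
    and P_group: "group P"
    and P_finite: "finite (carrier P)"
    and P_order: "card (carrier P) = p ^ m"
    and d_pos: "d \<ge> 1"
    and act_closed: "\<forall>t\<in>Zpd p d. \<forall>g\<in>carrier P. act t g \<in> Zpd p d"
    and act_one: "\<forall>t\<in>Zpd p d. act t \<one>\<^bsub>P\<^esub> = t"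
    and act_mult: "\<forall>t\<in>Zpd p d. \<forall>g\<in>carrier P. \<forall>h\<in>carrier P.
                     act (act t g) h = act t (g \<otimes>\<^bsub>P\<^esub> h)"
    and act_add: "\<forall>t\<in>Zpd p d. \<forall>s\<in>Zpd p d. \<forall>g\<in>carrier P.
                     act (zadd p t s) g = zadd p (act t g) (act s g)"
    and act_lin: "\<forall>a\<in>zp p. \<forall>t\<in>Zpd p d. \<forall>g\<in>carrier P.
                     act (zpscal p a t) g = zpscal p a (act t g)"
    and rho_cocycle: "rho \<in> Z2 P (carrier P) (Tmod p d act)"
    and l_pos: "l \<ge> 1"
    and T_gamma: "lcsS P p d act rho (l - 1) = Tsub P p d"
    and T_series_index: "\<forall>i. card (rcosets\<^bsub>(Sgrp P p d act rho)\<lparr>carrier := Tser P p d act rho i\<rparr>\<^esub>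
                                   (Tser P p d act rho (Suc i))) = p"
    and eta_cocycle: "eta \<in> Z3 P (carrier P) (Tmod p d act)"
    and K_sub_J: "\<forall>y. K y \<subseteq> Jc P p d m act y"
    and K_zero: "\<forall>y. (\<lambda>g h. mzero (Mx p d m act y)) \<in> K y"
    and K_add: "\<forall>y. \<forall>\<sigma>\<in>K y. \<forall>\<tau>\<in>K y. Cadd (Mx p d m act y) \<sigma> \<tau> \<in> K y"
    and K_neg: "\<forall>y. \<forall>\<sigma>\<in>K y. (\<lambda>g h. mneg (Mx p d m act y) (\<sigma> g h)) \<in> K y"
    and K_inter: "\<forall>y. K y \<inter> Ic P p d m act y = {(\<lambda>g h. mzero (Mx p d m act y))}"
    and K_span: "\<forall>y. \<forall>\<sigma>\<in>Z2 P (carrier P) (Mx p d m act y).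
                   \<exists>\<kappa>\<in>K y. \<exists>\<iota>\<in>Ic P p d m act y. \<sigma> = Cadd (Mx p d m act y) \<kappa> \<iota>"
    and K_mul: "\<forall>y. K (Suc y) = (\<lambda>\<sigma> g h. mulM p (y + 3 * m) (\<sigma> g h)) ` K y"
    and etax_K: "etax \<in> K x"
    and etax_eta: "(\<lambda>g h k. msub (Tmod p d act) (conn P p d m act x etax g h k) (eta g h k))
                     \<in> B3 P (carrier P) (Tmod p d act)"
    and tL_compl: "\<forall>L\<in>Leta P p d act rho eta.
                     (\<forall>l\<in>L. tL L l \<in> mcar (Mx p d m act x))
                     \<and> subgroup (CL p d m act x (tL L) (\<lambda>_. mzero (Mx p d m act x)) L)
                                 (Gx P p d m act rho etax x)"
  shows "{E. elem_ab p (Gx P p d m act rho etax x) E}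
           = (\<Union>L\<in>Leta P p d act rho eta. Cx P p d m act rho etax x (tL L) L)
         \<and> disjoint_family_on (\<lambda>L. Cx P p d m act rho etax x (tL L) L) (Leta P p d act rho eta)"
proof -
  have p_pos: "p > 0" using p_prime prime_gt_0_nat by blast
  have Tax: "tset P p d act"
    by (rule tset.intro[OF p_pos P_group act_closed act_one act_mult act_add act_lin])
  interpret T: tset P p d act by (rule Tax)
  interpret Pg: group P by (rule P_group)
  define \<tau> where "\<tau> = (\<lambda>g h. madd (Mx p d m act x) (trunc (x + 3 * m) (rho g h)) (etax g h))"
  have Mxeq: "Mx p d m act x = Mmod p d (x + 3 * m) act" unfolding Mx_def ..
  have Geq: "Gx P p d m act rho etax x = ext_group P (Mmod p d (x + 3 * m) act) \<tau>"
    unfolding Gx_def \<tau>_def Mxeq ..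
  have etaxJ: "etax \<in> Jc P p d m act x" using K_sub_J etax_K by blast
  have etaxZ2: "etax \<in> Z2 P (carrier P) (Mmod p d (x + 3 * m) act)"
    using etaxJ unfolding Jc_def Mx_def by auto
  have tauZ2: "\<tau> \<in> Z2 P (carrier P) (Mmod p d (x + 3 * m) act)"
    unfolding \<tau>_def Mxeq by (rule T.tau_Z2[OF rho_cocycle etaxZ2])
  have Gax: "gset P p d act (x + 3 * m) \<tau>"
    by (rule gset.intro[OF Tax gset_axioms.intro[OF tauZ2 p_prime P_finite]])
  interpret Gs: gset P p d act "x + 3 * m" \<tau> by (rule Gax)
  interpret Gg: group "ext_group P (Mmod p d (x + 3 * m) act) \<tau>" by (rule Gs.G_group)
  let ?M = "Mmod p d (x + 3 * m) act"
  let ?G = "ext_group P (Mmod p d (x + 3 * m) act) \<tau>"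
  have CL_eq: "CL p d m act x t \<gamma> L = (\<lambda>l. (l, madd ?M (t l) (\<gamma> l))) ` L" for t \<gamma> L
    unfolding CL_def Mxeq by blast
  have Leta_ab: "elem_ab p P L" if "L \<in> Leta P p d act rho eta" for L
    using that unfolding Leta_def Lcal_def by blast
  have Leta_P: "l \<in> carrier P" if "L \<in> Leta P p d act rho eta" "l \<in> L" for L l
    using Leta_ab[OF that(1)] that(2) subgroup.subset unfolding elem_ab_def by blast
  have tfacts: "(\<forall>l\<in>L. tL L l \<in> mcar ?M) \<and> tL L \<one>\<^bsub>P\<^esub> = mzero ?M \<and>
      (\<forall>l\<in>L. \<forall>l'\<in>L. tL L (l \<otimes>\<^bsub>P\<^esub> l') = madd ?M (madd ?M (mact ?M (tL L l) l') (tL L l')) (\<tau> l l'))"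
    if L: "L \<in> Leta P p d act rho eta" for L
  proof -
    have tM: "\<forall>l\<in>L. tL L l \<in> mcar ?M" and sub: "subgroup (CL p d m act x (tL L) (\<lambda>_. mzero (Mx p d m act x)) L) ?G"
      using tL_compl L unfolding Mxeq Geq by auto
    have ceq: "CL p d m act x (tL L) (\<lambda>_. mzero (Mx p d m act x)) L = (\<lambda>l. (l, tL L l)) ` L"
    proof -
      have "madd ?M (tL L l) (mzero ?M) = tL L l" if "l \<in> L" for l
        using tM that by (simp add: fun_eq_iff T.madd_app T.mzero_app T.mcar_mod)
      then show ?thesis unfolding CL_eq Mxeq by (auto simp: image_iff)
    qed
    have one: "\<one>\<^bsub>?G\<^esub> \<in> (\<lambda>l. (l, tL L l)) ` L" using subgroup.one_closed[OF sub] ceq by simp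
    then have t1: "tL L \<one>\<^bsub>P\<^esub> = mzero ?M" by (auto simp: T.ext_one)
    have rel: "tL L (l \<otimes>\<^bsub>P\<^esub> l') = madd ?M (madd ?M (mact ?M (tL L l) l') (tL L l')) (\<tau> l l')"
      if l: "l \<in> L" and l': "l' \<in> L" for l l'
    proof -
      have "(l, tL L l) \<otimes>\<^bsub>?G\<^esub> (l', tL L l') \<in> (\<lambda>l. (l, tL L l)) ` L"
        using subgroup.m_closed[OF sub] ceq l l' by auto
      then show ?thesis by (auto simp: T.ext_mult)
    qed
    show ?thesis using tM t1 rel by blast
  qed
  have fst_Cx: "fst ` Y = L" if L: "L \<in> Leta P p d act rho eta" and Y: "Y \<in> Cx P p d m act rho etax x (tL L) L" for L Y
  proof -
    obtain \<gamma> Q where Y: "Y = set_mult ?G (CL p d m act x (tL L) \<gamma> L) Q" and Q: "Q \<in> Ox P p d m act rho etax x L"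
      using Y unfolding Cx_def Geq by auto
    have QN: "Q \<subseteq> {\<one>\<^bsub>P\<^esub>} \<times> mcar ?M" and Qab: "elem_ab p ?G Q"
      using Q unfolding Ox_def Mxeq Geq by auto
    have "\<one>\<^bsub>?G\<^esub> \<in> Q" using Qab unfolding elem_ab_def by (auto intro: subgroup.one_closed)
    then show ?thesis unfolding Y CL_eq by (rule Gs.fst_prod[OF _ QN]) (rule Leta_P[OF L])
  qed
  show ?thesis
  proof (intro conjI)
    show "{E. elem_ab p (Gx P p d m act rho etax x) E} = (\<Union>L\<in>Leta P p d act rho eta. Cx P p d m act rho etax x (tL L) L)"
    proof
      show "{E. elem_ab p (Gx P p d m act rho etax x) E} \<subseteq> (\<Union>L\<in>Leta P p d act rho eta. Cx P p d m act rho etax x (tL L) L)"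
      proof
        fix E assume "E \<in> {E. elem_ab p (Gx P p d m act rho etax x) E}"
        then have E: "elem_ab p ?G E" unfolding Geq by simp
        have sE: "subgroup E ?G" and cE: "\<And>a b. a \<in> E \<Longrightarrow> b \<in> E \<Longrightarrow> a \<otimes>\<^bsub>?G\<^esub> b = b \<otimes>\<^bsub>?G\<^esub> a"
          and eE: "\<And>a. a \<in> E \<Longrightarrow> a [^]\<^bsub>?G\<^esub> p = \<one>\<^bsub>?G\<^esub>"
          using E unfolding elem_ab_def by auto
        define L where "L = fst ` E"
        have Lab: "elem_ab p P L" unfolding L_def by (rule Gs.elem_ab_image[OF E])
        have Lsub: "subgroup L P" using Lab unfolding elem_ab_def by blast
        obtain cf where cfM: "\<forall>l\<in>L. cf l \<in> mcar ?M" and cf1: "cf \<one>\<^bsub>P\<^esub> = mzero ?M"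
          and rel: "\<forall>l\<in>L. \<forall>l'\<in>L. cf (l \<otimes>\<^bsub>P\<^esub> l') = madd ?M (madd ?M (mact ?M (cf l) l') (cf l')) (\<tau> l l')"
          and decomp: "E = set_mult ?G ((\<lambda>l. (l, cf l)) ` L) (E \<inter> ({\<one>\<^bsub>P\<^esub>} \<times> mcar ?M))"
          and centr: "\<forall>l\<in>L. \<forall>u. (\<one>\<^bsub>P\<^esub>, u) \<in> E \<longrightarrow> mact ?M u l = u"
          using Gs.forward_struct[OF E] unfolding L_def[symmetric] by blast
        have cfM': "\<And>l. l \<in> L \<Longrightarrow> cf l \<in> mcar ?M" using cfM by blast
        have rel': "\<And>l l'. l \<in> L \<Longrightarrow> l' \<in> L \<Longrightarrow> cf (l \<otimes>\<^bsub>P\<^esub> l') =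
            madd ?M (madd ?M (mact ?M (cf l) l') (cf l')) (madd ?M (trunc (x + 3 * m) (rho l l')) (etax l l'))"
          using rel unfolding \<tau>_def Mxeq by blast
        have Cax: "cset P p d act L cf rho eta etax m x"
          by (rule cset.intro[OF Tax cset_axioms.intro[OF rho_cocycle eta_cocycle etaxJ etax_eta P_order P_finite Lsub cfM' cf1 rel']])
        interpret C: cset P p d act L cf rho eta etax m x by (rule Cax)
        have LL: "L \<in> Leta P p d act rho eta"
          unfolding Leta_def Lcal_def using Lab C.rho_B2 C.eta_B3 by blast
        have tM: "\<And>l. l \<in> L \<Longrightarrow> tL L l \<in> mcar ?M" and t1: "tL L \<one>\<^bsub>P\<^esub> = mzero ?M"
          and trel: "\<And>l l'. l \<in> L \<Longrightarrow> l' \<in> L \<Longrightarrow> tL L (l \<otimes>\<^bsub>P\<^esub> l') = madd ?M (madd ?M (mact ?M (tL L l) l') (tL L l')) (\<tau> l l')"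
          using tfacts[OF LL] by auto
        have LP: "\<And>l. l \<in> L \<Longrightarrow> l \<in> carrier P" using subgroup.subset[OF Lsub] by blast
        define \<gamma> where "\<gamma> l = (if l \<in> L then madd ?M (cf l) (mneg ?M (tL L l)) else mzero ?M)" for l
        have \<gamma>Z1: "\<gamma> \<in> Z1 P L (Mx p d m act x)"
          unfolding Mxeq Z1_def cochain1_def
        proof (intro CollectI conjI ballI allI impI)
          fix l assume "l \<in> L" then show "\<gamma> l \<in> mcar ?M" using cfM' tM by (simp add: \<gamma>_def)
        next
          fix l assume "l \<notin> L" then show "\<gamma> l = mzero ?M" by (simp add: \<gamma>_def)
        next
          show "\<gamma> \<one>\<^bsub>P\<^esub> = mzero ?M"
            using Lsub by (simp add: \<gamma>_def cf1 t1 subgroup.one_closed fun_eq_iff T.madd_app T.mneg_app T.mzero_app)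
        next
          fix l l' assume l: "l \<in> L" and l': "l' \<in> L"
          have ll': "l \<otimes>\<^bsub>P\<^esub> l' \<in> L" using subgroup.m_closed[OF Lsub l l'] .
          show "\<gamma> (l \<otimes>\<^bsub>P\<^esub> l') = madd ?M (mact ?M (\<gamma> l) l') (\<gamma> l')"
            unfolding \<gamma>_def using l l' ll'
            by (simp add: Gs.rel_sub[OF LP[OF l] LP[OF l'] tM[OF l] tM[OF l'] cfM'[OF l] cfM'[OF l'] trel[OF l l'] rel[rule_format, OF l l']])
        qed
        define Q where "Q = E \<inter> ({\<one>\<^bsub>P\<^esub>} \<times> mcar ?M)"
        have QOx: "Q \<in> Ox P p d m act rho etax x L"
          unfolding Ox_def Mxeq Geq
        proof (intro CollectI conjI ballI allI impI)
          show "Q \<subseteq> {\<one>\<^bsub>P\<^esub>} \<times> mcar ?M" unfolding Q_def by blast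
          have sQ: "subgroup Q ?G" unfolding Q_def by (rule Gg.subgroups_Inter_pair[OF sE Gs.N_sub])
          show "elem_ab p ?G Q" unfolding elem_ab_def using sQ cE eE unfolding Q_def by blast
          fix l u assume "l \<in> L" "(\<one>\<^bsub>P\<^esub>, u) \<in> Q"
          then show "mact ?M u l = u" using centr unfolding Q_def by blast
        qed
        have CLeq: "CL p d m act x (tL L) \<gamma> L = (\<lambda>l. (l, cf l)) ` L"
        proof -
          have "madd ?M (tL L l) (\<gamma> l) = cf l" if l: "l \<in> L" for l
          proof -
            have "madd ?M (tL L l) (madd ?M (cf l) (mneg ?M (tL L l))) i = cf l i" for i
              using T.mcar_mod[OF cfM'[OF l], of i] by (simp add: T.madd_app T.mneg_app modn)
            then show ?thesis using l by (simp add: \<gamma>_def fun_eq_iff)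
          qed
          then show ?thesis unfolding CL_eq by (auto simp: image_iff)
        qed
        have "E = set_mult (Gx P p d m act rho etax x) (CL p d m act x (tL L) \<gamma> L) Q"
          unfolding CLeq Q_def Geq using decomp .
        then have "E \<in> Cx P p d m act rho etax x (tL L) L"
          unfolding Cx_def using \<gamma>Z1 QOx by blast
        then show "E \<in> (\<Union>L\<in>Leta P p d act rho eta. Cx P p d m act rho etax x (tL L) L)"
          using LL by blast
      qed
      show "(\<Union>L\<in>Leta P p d act rho eta. Cx P p d m act rho etax x (tL L) L) \<subseteq> {E. elem_ab p (Gx P p d m act rho etax x) E}"
      proof
        fix Y assume "Y \<in> (\<Union>L\<in>Leta P p d act rho eta. Cx P p d m act rho etax x (tL L) L)"
        then obtain L where L: "L \<in> Leta P p d act rho eta" and Y: "Y \<in> Cx P p d m act rho etax x (tL L) L" by blast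
        obtain \<gamma> Q where Y: "Y = set_mult ?G (CL p d m act x (tL L) \<gamma> L) Q"
          and \<gamma>: "\<gamma> \<in> Z1 P L ?M" and Q: "Q \<in> Ox P p d m act rho etax x L"
          using Y unfolding Cx_def Geq Mxeq by auto
        have tM: "\<And>l. l \<in> L \<Longrightarrow> tL L l \<in> mcar ?M" and t1: "tL L \<one>\<^bsub>P\<^esub> = mzero ?M"
          and trel: "\<And>l l'. l \<in> L \<Longrightarrow> l' \<in> L \<Longrightarrow> tL L (l \<otimes>\<^bsub>P\<^esub> l') = madd ?M (madd ?M (mact ?M (tL L l) l') (tL L l')) (\<tau> l l')"
          using tfacts[OF L] by auto
        have gM: "\<And>l. l \<in> L \<Longrightarrow> \<gamma> l \<in> mcar ?M" and g1: "\<gamma> \<one>\<^bsub>P\<^esub> = mzero ?M"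
          and grel: "\<And>l l'. l \<in> L \<Longrightarrow> l' \<in> L \<Longrightarrow> \<gamma> (l \<otimes>\<^bsub>P\<^esub> l') = madd ?M (mact ?M (\<gamma> l) l') (\<gamma> l')"
          using \<gamma> unfolding Z1_def cochain1_def by auto
        define c where "c l = madd ?M (tL L l) (\<gamma> l)" for l
        have cM: "\<And>l. l \<in> L \<Longrightarrow> c l \<in> mcar ?M" using tM gM by (simp add: c_def)
        have c1: "c \<one>\<^bsub>P\<^esub> = mzero ?M" unfolding c_def t1 g1 by (simp add: fun_eq_iff T.madd_app T.mzero_app)
        have crel: "c (l \<otimes>\<^bsub>P\<^esub> l') = madd ?M (madd ?M (mact ?M (c l) l') (c l')) (\<tau> l l')"
          if "l \<in> L" "l' \<in> L" for l l'
          unfolding c_def by (rule Gs.rel_add[OF Leta_P[OF L that(1)] Leta_P[OF L that(2)] tM[OF that(1)] tM[OF that(2)]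
              gM[OF that(1)] gM[OF that(2)] trel[OF that] grel[OF that]])
        have Cab: "elem_ab p ?G ((\<lambda>l. (l, c l)) ` L)"
          by (rule Gs.graph_elem_ab[OF Leta_ab[OF L] cM c1 crel])
        have QN: "Q \<subseteq> {\<one>\<^bsub>P\<^esub>} \<times> mcar ?M" and Qab: "elem_ab p ?G Q"
          and Qc: "\<And>l u. l \<in> L \<Longrightarrow> (\<one>\<^bsub>P\<^esub>, u) \<in> Q \<Longrightarrow> mact ?M u l = u"
          using Q unfolding Ox_def Mxeq Geq by auto
        have comm: "a \<otimes>\<^bsub>?G\<^esub> b = b \<otimes>\<^bsub>?G\<^esub> a" if a: "a \<in> (\<lambda>l. (l, c l)) ` L" and b: "b \<in> Q" for a b
        proof -
          obtain l where l: "l \<in> L" "a = (l, c l)" using a by blast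
          obtain u where u: "b = (\<one>\<^bsub>P\<^esub>, u)" "u \<in> mcar ?M" using b QN by auto
          show ?thesis using Gs.comm_N[OF Leta_P[OF L l(1)] cM[OF l(1)] u(2)] Qc[OF l(1)] b u l by simp
        qed
        have "Y = set_mult ?G ((\<lambda>l. (l, c l)) ` L) Q" unfolding Y CL_eq c_def ..
        then have "elem_ab p ?G Y" using Gg.elem_ab_prod[OF Cab Qab comm] by simp
        then show "Y \<in> {E. elem_ab p (Gx P p d m act rho etax x) E}" unfolding Geq by simp
      qed
    qed
    show "disjoint_family_on (\<lambda>L. Cx P p d m act rho etax x (tL L) L) (Leta P p d act rho eta)"
      unfolding disjoint_family_on_def
    proof (intro ballI impI)
      fix L1 L2 assume L1: "L1 \<in> Leta P p d act rho eta" and L2: "L2 \<in> Leta P p d act rho eta" and ne: "L1 \<noteq> L2"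
      show "Cx P p d m act rho etax x (tL L1) L1 \<inter> Cx P p d m act rho etax x (tL L2) L2 = {}"
      proof (rule ccontr)
        assume "Cx P p d m act rho etax x (tL L1) L1 \<inter> Cx P p d m act rho etax x (tL L2) L2 \<noteq> {}"
        then obtain Y where "Y \<in> Cx P p d m act rho etax x (tL L1) L1" "Y \<in> Cx P p d m act rho etax x (tL L2) L2" by blast
        then have "fst ` Y = L1" "fst ` Y = L2" using fst_Cx L1 L2 by blast+
        then show False using ne by simp
      qed
    qed
  qed
qed

end
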